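(* Let $(u_\beta)_{\beta<\alpha}$, with $\alpha\ge1$, be a densely non-increasing sequence of prime words. Then $u_0$ is the longest prime prefix of the product $\prod_{\beta<\alpha}u_\beta$.
   Context: $A$ is a finite alphabet with a linear order $<_A$. Words are sequences of letters indexed by countable ordinals; $\prod$ denotes ordered concatenation and $x^\alpha$ the concatenation of $\alpha$ copies of $x$. A prefix of $x$ is $x[0,\gamma)$, a suffix is $x[\gamma,|x|)$, proper if $0<\gamma<|x|$. Write $x<_{str}x'$ if there are letters $a<_Ab$ and words $y,z,z'$ with $x=yaz$, $x'=ybz'$; $x\le_{lex}x'$ iff $x$ is a prefix of $x'$ or $x<_{str}x'$. A word is primitive if $x=y^\alpha$ implies $\alpha=1$ and $y=x$; $w$ is prime if it is primitive and every proper suffix $z$ satisfies $w\le_{lex}z$. A sequence $(u_\beta)_{\beta<\alpha}$ of words is densely non-increasing if for all $\gamma<\gamma'\le\alpha$, either $u_\beta=u_\gamma$ for all $\gamma\le\beta<\gamma'$, or there exist $\gamma\le\beta<\beta'<\gamma'$ with $u_\beta>_{lex}u_{\beta'}$. *)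

theory Defs
  imports Main "HOL-Library.Countable_Set"
begin

text \<open>A word is represented by a well-order \<open>r\<close> on a
(countable) set of positions \<open>Field r\<close> together with a labelling of the
positions by letters. Words are identified up to label-preserving order
isomorphism (relation \<open>word_eq\<close>); a countable ordinal is represented by a
countable well-order.\<close>

type_synonym ('p, 'a) word = "'p rel \<times> ('p \<Rightarrow> 'a)"

definition wf_word :: "('p, 'a) word \<Rightarrow> bool" where
  "wf_word x \<longleftrightarrow> Well_order (fst x) \<and> countable (Field (fst x))"

definition word_eq :: "('p, 'a) word \<Rightarrow> ('q, 'a) word \<Rightarrow> bool" where
  "word_eq x y \<longleftrightarrow> (\<exists>f. bij_betw f (Field (fst x)) (Field (fst y))
     \<and> (\<forall>p\<in>Field (fst x). \<forall>q\<in>Field (fst x). (p, q) \<in> fst x \<longleftrightarrow> (f p, f q) \<in> fst y)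
     \<and> (\<forall>p\<in>Field (fst x). snd y (f p) = snd x p))"

definition restrict_word :: "('p, 'a) word \<Rightarrow> 'p set \<Rightarrow> ('p, 'a) word" where
  "restrict_word x S = (Restr (fst x) S, snd x)"

text \<open>Initial segments of the positions: these are exactly the position sets
of prefixes \<open>x[0,\<gamma>)\<close>, \<open>0 \<le> \<gamma> \<le> |x|\<close>.\<close>
definition init_seg :: "('p, 'a) word \<Rightarrow> 'p set \<Rightarrow> bool" where
  "init_seg x S \<longleftrightarrow> S \<subseteq> Field (fst x) \<and>
     (\<forall>p\<in>S. \<forall>q. (q, p) \<in> fst x \<longrightarrow> q \<in> S)"

definition below :: "('p, 'a) word \<Rightarrow> 'p \<Rightarrow> 'p set" where
  "below x p = {q. (q, p) \<in> fst x \<and> q \<noteq> p}"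

definition is_prefix :: "('p, 'a) word \<Rightarrow> ('q, 'a) word \<Rightarrow> bool" where
  "is_prefix x x' \<longleftrightarrow> (\<exists>S. init_seg x' S \<and> word_eq x (restrict_word x' S))"

text \<open>\<open>x <_str x'\<close>: \<open>x = y a z\<close>, \<open>x' = y b z'\<close> with \<open>a < b\<close>; here \<open>a\<close> sits at
position \<open>p\<close> of \<open>x\<close>, \<open>b\<close> at position \<open>p'\<close> of \<open>x'\<close>, and \<open>y\<close> is the common
prefix before them.\<close>
definition str_less :: "('p, 'a::linorder) word \<Rightarrow> ('q, 'a) word \<Rightarrow> bool" where
  "str_less x x' \<longleftrightarrow> (\<exists>p\<in>Field (fst x). \<exists>p'\<in>Field (fst x').
     word_eq (restrict_word x (below x p)) (restrict_word x' (below x' p'))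
     \<and> snd x p < snd x' p')"

definition lex_le :: "('p, 'a::linorder) word \<Rightarrow> ('q, 'a) word \<Rightarrow> bool" where
  "lex_le x x' \<longleftrightarrow> is_prefix x x' \<or> str_less x x'"

definition lex_less :: "('p, 'a::linorder) word \<Rightarrow> ('q, 'a) word \<Rightarrow> bool" where
  "lex_less x x' \<longleftrightarrow> lex_le x x' \<and> \<not> word_eq x x'"

text \<open>Ordered concatenation \<open>\<Prod>_{\<beta><\<alpha>} u_\<beta>\<close>, the index ordinal \<open>\<alpha>\<close> being
given by a well-order \<open>A\<close>.\<close>
definition word_prod :: "'i rel \<Rightarrow> ('i \<Rightarrow> ('p, 'a) word) \<Rightarrow> ('i \<times> 'p, 'a) word" where
  "word_prod A u =
     ({((i, p), (j, q)). i \<in> Field A \<and> j \<in> Field A \<and> p \<in> Field (fst (u i)) \<and> q \<in> Field (fst (u j))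
        \<and> ((i \<noteq> j \<and> (i, j) \<in> A) \<or> (i = j \<and> (p, q) \<in> fst (u i)))},
      \<lambda>(i, p). snd (u i) p)"

definition word_pow :: "('p, 'a) word \<Rightarrow> 'i rel \<Rightarrow> ('i \<times> 'p, 'a) word" where
  "word_pow y A = word_prod A (\<lambda>_. y)"

text \<open>All countable words and
countable ordinals are represented (up to isomorphism) on positions in \<open>nat\<close>.\<close>
definition primitive :: "('p, 'a) word \<Rightarrow> bool" where
  "primitive x \<longleftrightarrow> (\<forall>(A :: nat rel) (y :: (nat, 'a) word).
     Well_order A \<and> wf_word y \<and> word_eq x (word_pow y A) \<longrightarrow>
       (\<exists>i. Field A = {i}) \<and> word_eq y x)"

definition prime_word :: "('p, 'a::linorder) word \<Rightarrow> bool" where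
  "prime_word w \<longleftrightarrow> primitive w \<and>
     (\<forall>S. init_seg w S \<and> S \<noteq> {} \<and> S \<noteq> Field (fst w) \<longrightarrow>
        lex_le w (restrict_word w (Field (fst w) - S)))"

text \<open>Interval \<open>[\<gamma>, \<gamma>')\<close> of the index order \<open>A\<close>; \<open>None\<close> stands for \<open>\<gamma>' = \<alpha>\<close>.\<close>
definition ivl :: "'i rel \<Rightarrow> 'i \<Rightarrow> 'i option \<Rightarrow> 'i set" where
  "ivl A g g' = {b \<in> Field A. (g, b) \<in> A \<and>
      (case g' of None \<Rightarrow> True | Some e \<Rightarrow> (b, e) \<in> A \<and> b \<noteq> e)}"

definition dense_nonincr :: "'i rel \<Rightarrow> ('i \<Rightarrow> ('p, 'a::linorder) word) \<Rightarrow> bool" where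
  "dense_nonincr A u \<longleftrightarrow>
    (\<forall>g\<in>Field A. \<forall>g'. (case g' of None \<Rightarrow> True
                         | Some e \<Rightarrow> e \<in> Field A \<and> (g, e) \<in> A \<and> g \<noteq> e) \<longrightarrow>
       (\<forall>b\<in>ivl A g g'. word_eq (u b) (u g)) \<or>
       (\<exists>b\<in>ivl A g g'. \<exists>b'\<in>ivl A g g'. (b, b') \<in> A \<and> b \<noteq> b' \<and> lex_less (u b') (u b)))"

end

theory Submission
  imports Defs
begin

section \<open>Well-order basics\<close>

lemma WO_refl: "Well_order r \<Longrightarrow> a \<in> Field r \<Longrightarrow> (a,a) \<in> r"
  unfolding well_order_on_def linear_order_on_def partial_order_on_def preorder_on_def refl_on_def
  by blast

lemma WO_trans: "Well_order r \<Longrightarrow> (a,b) \<in> r \<Longrightarrow> (b,c) \<in> r \<Longrightarrow> (a,c) \<in> r"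
  unfolding well_order_on_def linear_order_on_def partial_order_on_def preorder_on_def trans_def
  by blast

lemma WO_antisym: "Well_order r \<Longrightarrow> (a,b) \<in> r \<Longrightarrow> (b,a) \<in> r \<Longrightarrow> a = b"
  unfolding well_order_on_def linear_order_on_def partial_order_on_def antisym_def
  by blast

lemma WO_total: "Well_order r \<Longrightarrow> a \<in> Field r \<Longrightarrow> b \<in> Field r \<Longrightarrow> (a,b) \<in> r \<or> (b,a) \<in> r"
  unfolding well_order_on_def linear_order_on_def total_on_def
  by (metis refl_onD partial_order_on_def preorder_on_def)

lemma WO_wf: "Well_order r \<Longrightarrow> wf (r - Id)"
  unfolding well_order_on_def by blast

lemma WO_Field: "(a,b) \<in> r \<Longrightarrow> a \<in> Field r \<and> b \<in> Field r"
  by (auto simp: Field_def)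

lemma WO_min:
  assumes "Well_order r" "Q \<subseteq> Field r" "q \<in> Q"
  shows "\<exists>m\<in>Q. \<forall>q\<in>Q. (m,q) \<in> r"
proof -
  obtain m where m: "m \<in> Q" "\<And>y. (y,m) \<in> r - Id \<Longrightarrow> y \<notin> Q"
    using wfE_min[OF WO_wf[OF assms(1)] assms(3)] by metis
  have "\<forall>q\<in>Q. (m,q) \<in> r"
  proof
    fix q assume "q \<in> Q"
    then show "(m,q) \<in> r"
      using m assms WO_total[of r m q] WO_refl[of r m] by blast
  qed
  with m show ?thesis by blast
qed

lemma WO_strict_mono_ge:
  assumes wo: "Well_order r" and S: "S \<subseteq> Field r" and fS: "f ` S \<subseteq> Field r"
    and inj: "inj_on f S"
    and mono: "\<And>p q. p \<in> S \<Longrightarrow> q \<in> S \<Longrightarrow> (p,q) \<in> r \<Longrightarrow> (f p, f q) \<in> r"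
    and down: "\<And>p q. p \<in> S \<Longrightarrow> (q,p) \<in> r \<Longrightarrow> q \<in> S"
    and a: "a \<in> S"
  shows "(a, f a) \<in> r"
proof (rule ccontr)
  assume na: "(a, f a) \<notin> r"
  let ?M = "{a\<in>S. (a, f a) \<notin> r}"
  obtain m where m: "m \<in> ?M" "\<And>y. (y,m) \<in> r - Id \<Longrightarrow> y \<notin> ?M"
    using wfE_min[OF WO_wf[OF wo], of a ?M] a na by blast
  have mS: "m \<in> S" and nm: "(m, f m) \<notin> r" using m by auto
  have fm: "(f m, m) \<in> r" using WO_total[OF wo, of m "f m"] mS S fS nm by auto
  have fmne: "f m \<noteq> m" using nm WO_refl[OF wo, of m] mS S by auto
  have fmS: "f m \<in> S" using down[OF mS fm] .
  have "f m \<notin> ?M" using m(2)[of "f m"] fm fmne by blast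
  hence 1: "(f m, f (f m)) \<in> r" using fmS by blast
  have 2: "(f (f m), f m) \<in> r" using mono[OF fmS mS fm] .
  have "f (f m) = f m" using WO_antisym[OF wo 1 2] by simp
  hence "f m = m" using inj fmS mS by (auto dest: inj_onD)
  with fmne show False by simp
qed

lemma WO_iso_subset:
  assumes wo: "Well_order r" and S: "S \<subseteq> Field r" and S': "S' \<subseteq> Field r"
    and bij: "bij_betw f S S'"
    and mono: "\<And>p q. p \<in> S \<Longrightarrow> q \<in> S \<Longrightarrow> (p,q) \<in> r \<Longrightarrow> (f p, f q) \<in> r"
    and down: "\<And>p q. p \<in> S \<Longrightarrow> (q,p) \<in> r \<Longrightarrow> q \<in> S"
    and down': "\<And>p q. p \<in> S' \<Longrightarrow> (q,p) \<in> r \<Longrightarrow> q \<in> S'"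
  shows "S \<subseteq> S'"
proof
  fix a assume a: "a \<in> S"
  have "(a, f a) \<in> r"
    by (rule WO_strict_mono_ge[OF wo S _ _ mono down a])
       (use bij S' in \<open>auto simp: bij_betw_def\<close>)
  moreover have "f a \<in> S'" using bij a by (auto simp: bij_betw_def)
  ultimately show "a \<in> S'" using down' by blast
qed

definition wiso :: "('p, 'a) word \<Rightarrow> ('q, 'a) word \<Rightarrow> ('p \<Rightarrow> 'q) \<Rightarrow> bool" where
  "wiso x y f \<longleftrightarrow> bij_betw f (Field (fst x)) (Field (fst y))
     \<and> (\<forall>p\<in>Field (fst x). \<forall>q\<in>Field (fst x). (p, q) \<in> fst x \<longleftrightarrow> (f p, f q) \<in> fst y)
     \<and> (\<forall>p\<in>Field (fst x). snd y (f p) = snd x p)"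

lemma word_eq_iff: "word_eq x y \<longleftrightarrow> (\<exists>f. wiso x y f)"
  by (simp add: word_eq_def wiso_def)

lemma wisoD:
  assumes "wiso x y f"
  shows "bij_betw f (Field (fst x)) (Field (fst y))"
    "\<And>p q. p\<in>Field (fst x) \<Longrightarrow> q\<in>Field (fst x) \<Longrightarrow> (p, q) \<in> fst x \<longleftrightarrow> (f p, f q) \<in> fst y"
    "\<And>p. p\<in>Field (fst x) \<Longrightarrow> snd y (f p) = snd x p"
    "f ` Field (fst x) = Field (fst y)"
    "inj_on f (Field (fst x))"
    "\<And>p. p\<in>Field (fst x) \<Longrightarrow> f p \<in> Field (fst y)"
  using assms unfolding wiso_def bij_betw_def by auto

lemma wiso_refl: "wiso x x id"
  by (simp add: wiso_def)

lemma word_eq_refl: "word_eq x x"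
  using wiso_refl word_eq_iff by blast

lemma wiso_sym:
  assumes "wiso x y f"
  shows "wiso y x (the_inv_into (Field (fst x)) f)"
proof -
  let ?g = "the_inv_into (Field (fst x)) f"
  have b: "bij_betw f (Field (fst x)) (Field (fst y))" using wisoD[OF assms] by blast
  have bg: "bij_betw ?g (Field (fst y)) (Field (fst x))"
    using bij_betw_the_inv_into[OF b] .
  have fg: "\<And>q. q \<in> Field (fst y) \<Longrightarrow> f (?g q) = q"
    using b by (simp add: bij_betw_def f_the_inv_into_f)
  have gin: "\<And>q. q \<in> Field (fst y) \<Longrightarrow> ?g q \<in> Field (fst x)"
    using bg by (auto simp: bij_betw_def)
  show ?thesis unfolding wiso_def
  proof (intro conjI ballI)
    show "bij_betw ?g (Field (fst y)) (Field (fst x))" by fact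
  next
    fix p q assume "p \<in> Field (fst y)" "q \<in> Field (fst y)"
    then show "(p, q) \<in> fst y \<longleftrightarrow> (?g p, ?g q) \<in> fst x"
      using wisoD(2)[OF assms, of "?g p" "?g q"] fg gin by auto
  next
    fix p assume "p \<in> Field (fst y)"
    then show "snd x (?g p) = snd y p"
      using wisoD(3)[OF assms, of "?g p"] fg gin by auto
  qed
qed

lemma word_eq_sym: "word_eq x y \<Longrightarrow> word_eq y x"
  unfolding word_eq_iff using wiso_sym by blast

lemma wiso_trans:
  assumes "wiso x y f" "wiso y z g"
  shows "wiso x z (g \<circ> f)"
  unfolding wiso_def
proof (intro conjI ballI)
  show "bij_betw (g \<circ> f) (Field (fst x)) (Field (fst z))"
    using wisoD(1)[OF assms(1)] wisoD(1)[OF assms(2)] bij_betw_trans by blast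
next
  fix p q assume "p \<in> Field (fst x)" "q \<in> Field (fst x)"
  then show "(p, q) \<in> fst x \<longleftrightarrow> ((g \<circ> f) p, (g \<circ> f) q) \<in> fst z"
    using wisoD(2,6)[OF assms(1)] wisoD(2)[OF assms(2)] by auto
next
  fix p assume "p \<in> Field (fst x)"
  then show "snd z ((g \<circ> f) p) = snd x p"
    using wisoD(3,6)[OF assms(1)] wisoD(3)[OF assms(2)] by auto
qed

lemma word_eq_trans: "word_eq x y \<Longrightarrow> word_eq y z \<Longrightarrow> word_eq x z"
  unfolding word_eq_iff using wiso_trans by blast

section \<open>Restrictions\<close>

lemma fst_restrict[simp]: "fst (restrict_word x S) = Restr (fst x) S"
  by (simp add: restrict_word_def)
lemma snd_restrict[simp]: "snd (restrict_word x S) = snd x"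
  by (simp add: restrict_word_def)

lemma restrict_restrict[simp]: "restrict_word (restrict_word x S) T = restrict_word x (S \<inter> T)"
  by (auto simp: restrict_word_def)

lemma restrict_Field_self: "restrict_word x (Field (fst x)) = x"
proof -
  have "Restr (fst x) (Field (fst x)) = fst x" by (auto simp: Field_def)
  then show ?thesis by (simp add: restrict_word_def)
qed

lemma Field_Restr_WO[simp]: "Well_order r \<Longrightarrow> Field (Restr r S) = S \<inter> Field r"
  using WO_refl[of r] by (auto simp: Field_def)

lemma WO_Restr_simp[simp]: "Well_order r \<Longrightarrow> well_order_on (S \<inter> Field r) (Restr r S)"
  using Well_order_Restr[of r S] Field_Restr_WO[of r S] by simp

lemma Field_restrict[simp]: "Well_order (fst x) \<Longrightarrow> Field (fst (restrict_word x S)) = S \<inter> Field (fst x)"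
  by (simp add: Field_Restr_WO)

lemma WO_restrict[simp]: "Well_order (fst x) \<Longrightarrow> Well_order (fst (restrict_word x S))"
  unfolding fst_restrict by (rule Well_order_Restr)

lemma wiso_restrict:
  assumes "wiso x y f" "Well_order (fst x)" "Well_order (fst y)"
  shows "wiso (restrict_word x S) (restrict_word y (f ` (S \<inter> Field (fst x)))) f"
  unfolding wiso_def
proof (intro conjI ballI)
  have b: "bij_betw f (Field (fst x)) (Field (fst y))" using wisoD[OF assms(1)] by blast
  have "f ` (S \<inter> Field (fst x)) \<subseteq> Field (fst y)" using b by (auto simp: bij_betw_def)
  then have e: "f ` (S \<inter> Field (fst x)) \<inter> Field (fst y) = f ` (S \<inter> Field (fst x))" by blast
  show "bij_betw f (Field (fst (restrict_word x S))) (Field (fst (restrict_word y (f ` (S \<inter> Field (fst x))))))"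
    using assms(2,3) e bij_betw_subset[OF b, of "S \<inter> Field (fst x)"] by (simp add: Int_commute)
next
  fix p q assume pq: "p \<in> Field (fst (restrict_word x S))" "q \<in> Field (fst (restrict_word x S))"
  then have "p \<in> S \<inter> Field (fst x)" "q \<in> S \<inter> Field (fst x)" using assms(2) by auto
  then show "(p, q) \<in> fst (restrict_word x S) \<longleftrightarrow> (f p, f q) \<in> fst (restrict_word y (f ` (S \<inter> Field (fst x))))"
    using wisoD(2)[OF assms(1), of p q] by auto
next
  fix p assume "p \<in> Field (fst (restrict_word x S))"
  then show "snd (restrict_word y (f ` (S \<inter> Field (fst x)))) (f p) = snd (restrict_word x S) p"
    using assms(2) wisoD(3)[OF assms(1)] by auto
qed

lemma below_restrict: "p \<in> S \<Longrightarrow> below (restrict_word x S) p = below x p \<inter> S"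
  by (auto simp: below_def)

lemma below_Field: "below x p \<subseteq> Field (fst x)"
  by (auto simp: below_def Field_def)

lemma init_seg_below: "Well_order (fst x) \<Longrightarrow> init_seg x (below x p)"
  unfolding init_seg_def below_def
  using WO_trans[of "fst x"] WO_antisym[of "fst x"] by (auto simp: Field_def)

lemma below_inj: "Well_order (fst x) \<Longrightarrow> p \<in> Field (fst x) \<Longrightarrow> q \<in> Field (fst x) \<Longrightarrow> below x p = below x q \<Longrightarrow> p = q"
  unfolding below_def using WO_total[of "fst x" p q] by blast

lemma init_seg_Field: "init_seg x (Field (fst x))"
  by (auto simp: init_seg_def Field_def)

lemma init_seg_empty: "init_seg x {}"
  by (auto simp: init_seg_def)

lemma init_seg_linear: "Well_order (fst x) \<Longrightarrow> init_seg x S \<Longrightarrow> init_seg x T \<Longrightarrow> S \<subseteq> T \<or> T \<subseteq> S"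
  unfolding init_seg_def using WO_total[of "fst x"] by blast

lemma init_seg_not_in: "Well_order (fst x) \<Longrightarrow> init_seg x S \<Longrightarrow> p \<in> Field (fst x) \<Longrightarrow> p \<notin> S \<Longrightarrow> S \<subseteq> below x p"
  unfolding init_seg_def below_def using WO_total[of "fst x"] by blast

lemma init_seg_restrict_iff:
  assumes "Well_order (fst x)" "init_seg x S"
  shows "init_seg (restrict_word x S) T \<longleftrightarrow> T \<subseteq> S \<and> init_seg x T"
  using assms unfolding init_seg_def by (auto simp: Field_Restr_WO)

lemma init_seg_iso_subset:
  assumes wo: "Well_order (fst x)" and S: "init_seg x S" and S': "init_seg x S'"
    and f: "wiso (restrict_word x S) (restrict_word x S') f"
  shows "S \<subseteq> S'"
proof -
  have SF: "S \<subseteq> Field (fst x)" and S'F: "S' \<subseteq> Field (fst x)" using S S' by (auto simp: init_seg_def)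
  have FS: "Field (fst (restrict_word x S)) = S" and FS': "Field (fst (restrict_word x S')) = S'"
    using SF S'F wo by auto
  show ?thesis
  proof (rule WO_iso_subset[OF wo SF S'F])
    show "bij_betw f S S'" using wisoD(1)[OF f] FS FS' by simp
    show "\<And>p q. p \<in> S \<Longrightarrow> q \<in> S \<Longrightarrow> (p,q) \<in> fst x \<Longrightarrow> (f p, f q) \<in> fst x"
      using wisoD(2)[OF f] FS by auto
    show "\<And>p q. p \<in> S \<Longrightarrow> (q,p) \<in> fst x \<Longrightarrow> q \<in> S" using S by (auto simp: init_seg_def)
    show "\<And>p q. p \<in> S' \<Longrightarrow> (q,p) \<in> fst x \<Longrightarrow> q \<in> S'" using S' by (auto simp: init_seg_def)
  qed
qed

lemma init_seg_eq_uniq: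
  assumes wo: "Well_order (fst x)" and S: "init_seg x S" and S': "init_seg x S'"
    and e: "word_eq (restrict_word x S) (restrict_word x S')"
  shows "S = S'"
  using init_seg_iso_subset[OF wo S S'] init_seg_iso_subset[OF wo S' S] e word_eq_sym[OF e]
  unfolding word_eq_iff by blast

lemma wiso_init_seg:
  assumes f: "wiso y z f" and wy: "Well_order (fst y)" and wz: "Well_order (fst z)"
    and S: "init_seg y S"
  shows "init_seg z (f ` S)"
  unfolding init_seg_def
proof (intro conjI ballI allI impI)
  have SF: "S \<subseteq> Field (fst y)" using S by (auto simp: init_seg_def)
  then show "f ` S \<subseteq> Field (fst z)" using wisoD(6)[OF f] by auto
next
  fix p' q' assume p': "p' \<in> f ` S" and qp: "(q', p') \<in> fst z"
  obtain p where p: "p \<in> S" "p' = f p" using p' by auto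
  have pF: "p \<in> Field (fst y)" using p S by (auto simp: init_seg_def)
  have "q' \<in> Field (fst z)" using qp by (auto simp: Field_def)
  then obtain q where q: "q \<in> Field (fst y)" "q' = f q" using wisoD(4)[OF f] by auto
  have "(q, p) \<in> fst y" using wisoD(2)[OF f q(1) pF] qp p q by simp
  then have "q \<in> S" using S p by (auto simp: init_seg_def)
  then show "q' \<in> f ` S" using q by auto
qed

lemma wiso_below:
  assumes f: "wiso y z f" and wy: "Well_order (fst y)" and wz: "Well_order (fst z)"
    and p: "p \<in> Field (fst y)"
  shows "f ` below y p = below z (f p)"
proof
  show "f ` below y p \<subseteq> below z (f p)"
  proof
    fix v assume "v \<in> f ` below y p"
    then obtain q where q: "q \<in> below y p" "v = f q" by auto
    have qF: "q \<in> Field (fst y)" using q below_Field[of y p] by blast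
    have "(f q, f p) \<in> fst z" using q wisoD(2)[OF f qF p] by (auto simp: below_def)
    moreover have "f q \<noteq> f p" using q wisoD(5)[OF f] qF p by (auto simp: below_def dest: inj_onD)
    ultimately show "v \<in> below z (f p)" using q by (auto simp: below_def)
  qed
next
  show "below z (f p) \<subseteq> f ` below y p"
  proof
    fix v assume v: "v \<in> below z (f p)"
    then have "v \<in> Field (fst z)" using below_Field[of z "f p"] by blast
    then obtain q where q: "q \<in> Field (fst y)" "v = f q" using wisoD(4)[OF f] by auto
    have "(q, p) \<in> fst y" using v q wisoD(2)[OF f q(1) p] by (auto simp: below_def)
    moreover have "q \<noteq> p" using v q by (auto simp: below_def)
    ultimately show "v \<in> f ` below y p" using q by (auto simp: below_def)
  qed
qed

lemma wiso_below_eq: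
  assumes f: "wiso y z f" and wy: "Well_order (fst y)" and wz: "Well_order (fst z)"
    and p: "p \<in> Field (fst y)"
  shows "wiso (restrict_word y (below y p)) (restrict_word z (below z (f p))) f"
proof -
  have "below y p \<inter> Field (fst y) = below y p" using below_Field[of y p] by blast
  then show ?thesis using wiso_restrict[OF f wy wz, of "below y p"] wiso_below[OF f wy wz p] by simp
qed

section \<open>Prefixes\<close>

lemma prefix_restrict: "init_seg x S \<Longrightarrow> is_prefix (restrict_word x S) x"
  unfolding is_prefix_def using word_eq_refl by blast

lemma prefix_refl: "is_prefix x x"
  using prefix_restrict[OF init_seg_Field] restrict_Field_self by metis

lemma prefix_eq_left: "word_eq x' x \<Longrightarrow> is_prefix x y \<Longrightarrow> is_prefix x' y"
  unfolding is_prefix_def using word_eq_trans by blast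

lemma prefix_eq_right:
  assumes e: "word_eq y y'" and p: "is_prefix x y" and wy: "Well_order (fst y)" and wy': "Well_order (fst y')"
  shows "is_prefix x y'"
proof -
  obtain f where f: "wiso y y' f" using e word_eq_iff by blast
  obtain S where S: "init_seg y S" "word_eq x (restrict_word y S)" using p is_prefix_def by blast
  have "S \<inter> Field (fst y) = S" using S by (auto simp: init_seg_def)
  then have "wiso (restrict_word y S) (restrict_word y' (f ` S)) f" using wiso_restrict[OF f wy wy', of S] by simp
  then have "word_eq x (restrict_word y' (f ` S))" using S word_eq_trans word_eq_iff by blast
  moreover have "init_seg y' (f ` S)" using wiso_init_seg[OF f wy wy' S(1)] .
  ultimately show ?thesis unfolding is_prefix_def by blast
qed

lemma init_seg_restr_trans:
  assumes "Well_order (fst z)" "init_seg z T" "init_seg (restrict_word z T) S"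
  shows "init_seg z S" "S \<subseteq> T"
  using init_seg_restrict_iff[OF assms(1,2)] assms(3) by auto

lemma prefix_trans:
  assumes p1: "is_prefix x y" and p2: "is_prefix y z" and wy: "Well_order (fst y)" and wz: "Well_order (fst z)"
  shows "is_prefix x z"
proof -
  obtain T where T: "init_seg z T" "word_eq y (restrict_word z T)" using p2 is_prefix_def by blast
  have "is_prefix x (restrict_word z T)" using prefix_eq_right[OF T(2) p1 wy WO_restrict[OF wz]] .
  then obtain S where S: "init_seg (restrict_word z T) S" "word_eq x (restrict_word (restrict_word z T) S)"
    using is_prefix_def by blast
  have "init_seg z S" "S \<subseteq> T" using init_seg_restr_trans[OF wz T(1) S(1)] by auto
  moreover have "restrict_word (restrict_word z T) S = restrict_word z S" using \<open>S \<subseteq> T\<close>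
    by (simp add: Int_absorb1)
  ultimately show ?thesis using S(2) unfolding is_prefix_def by auto
qed

lemma prefix_uniq:
  assumes wo: "Well_order (fst x)" and S: "init_seg x S" and S': "init_seg x S'"
    and p: "is_prefix (restrict_word x S) (restrict_word x S')"
  shows "S \<subseteq> S'"
proof -
  obtain T where T: "init_seg (restrict_word x S') T" "word_eq (restrict_word x S) (restrict_word (restrict_word x S') T)"
    using p is_prefix_def by blast
  have "init_seg x T" "T \<subseteq> S'" using init_seg_restr_trans[OF wo S' T(1)] by auto
  moreover have "restrict_word (restrict_word x S') T = restrict_word x T" using \<open>T \<subseteq> S'\<close>
    by (simp add: Int_absorb1)
  ultimately show ?thesis using init_seg_eq_uniq[OF wo S, of T] T(2) by auto
qed

lemma prefix_subset:
  assumes "init_seg x S" "init_seg x T" "S \<subseteq> T" "Well_order (fst x)"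
  shows "is_prefix (restrict_word x S) (restrict_word x T)"
proof -
  have "init_seg (restrict_word x T) S" using init_seg_restrict_iff[OF assms(4,2)] assms by auto
  moreover have "restrict_word (restrict_word x T) S = restrict_word x S" using assms(3) by (simp add: Int_absorb1)
  ultimately show ?thesis using prefix_restrict by metis
qed

section \<open>Strict lexicographic comparison\<close>

lemma str_lessE:
  assumes "str_less x y"
  obtains p p' where "p \<in> Field (fst x)" "p' \<in> Field (fst y)"
    "word_eq (restrict_word x (below x p)) (restrict_word y (below y p'))" "snd x p < snd y p'"
  using assms unfolding str_less_def by blast

lemma str_lessI:
  "p \<in> Field (fst x) \<Longrightarrow> p' \<in> Field (fst y) \<Longrightarrow>
    word_eq (restrict_word x (below x p)) (restrict_word y (below y p')) \<Longrightarrow> snd x p < snd y p' \<Longrightarrow> str_less x y"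
  unfolding str_less_def by blast

lemma str_iso_right:
  assumes s: "str_less x y" and f: "wiso y z f" and wy: "Well_order (fst y)" and wz: "Well_order (fst z)"
  shows "str_less x z"
proof -
  obtain p p' where pp: "p \<in> Field (fst x)" "p' \<in> Field (fst y)"
    "word_eq (restrict_word x (below x p)) (restrict_word y (below y p'))" "snd x p < snd y p'"
    using str_lessE[OF s] by blast
  have "word_eq (restrict_word y (below y p')) (restrict_word z (below z (f p')))"
    using wiso_below_eq[OF f wy wz pp(2)] word_eq_iff by blast
  then have "word_eq (restrict_word x (below x p)) (restrict_word z (below z (f p')))"
    using word_eq_trans[OF pp(3)] by blast
  moreover have "snd z (f p') = snd y p'" using wisoD(3)[OF f pp(2)] .
  ultimately show ?thesis using pp wisoD(6)[OF f pp(2)] by (intro str_lessI[of p _ "f p'"]) auto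
qed

lemma str_iso_left:
  assumes s: "str_less x y" and f: "wiso x z f" and wx: "Well_order (fst x)" and wz: "Well_order (fst z)"
  shows "str_less z y"
proof -
  obtain p p' where pp: "p \<in> Field (fst x)" "p' \<in> Field (fst y)"
    "word_eq (restrict_word x (below x p)) (restrict_word y (below y p'))" "snd x p < snd y p'"
    using str_lessE[OF s] by blast
  have "word_eq (restrict_word x (below x p)) (restrict_word z (below z (f p)))"
    using wiso_below_eq[OF f wx wz pp(1)] word_eq_iff by blast
  then have "word_eq (restrict_word z (below z (f p))) (restrict_word y (below y p'))"
    using word_eq_trans[OF word_eq_sym pp(3)] by blast
  moreover have "snd z (f p) = snd x p" using wisoD(3)[OF f pp(1)] .
  ultimately show ?thesis using pp wisoD(6)[OF f pp(1)]
    by (intro str_lessI[of "f p" _ p']) auto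
qed

lemma str_eq_right: "str_less x y \<Longrightarrow> word_eq y z \<Longrightarrow> Well_order (fst y) \<Longrightarrow> Well_order (fst z) \<Longrightarrow> str_less x z"
  using str_iso_right word_eq_iff by blast

lemma str_eq_left: "str_less x y \<Longrightarrow> word_eq x z \<Longrightarrow> Well_order (fst x) \<Longrightarrow> Well_order (fst z) \<Longrightarrow> str_less z y"
  using str_iso_left word_eq_iff by blast

lemma restrict_below_init:
  assumes "init_seg y T" "p \<in> T" "Well_order (fst y)"
  shows "restrict_word (restrict_word y T) (below (restrict_word y T) p) = restrict_word y (below y p)"
proof -
  have "below y p \<subseteq> T" using assms by (auto simp: below_def init_seg_def)
  then show ?thesis using assms by (simp add: below_restrict Int_absorb1 Int_absorb2)
qed

lemma str_restr_right:
  assumes s: "str_less x (restrict_word y T)" and T: "init_seg y T" and wy: "Well_order (fst y)"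
  shows "str_less x y"
proof -
  obtain p p' where pp: "p \<in> Field (fst x)" "p' \<in> Field (fst (restrict_word y T))"
    "word_eq (restrict_word x (below x p)) (restrict_word (restrict_word y T) (below (restrict_word y T) p'))"
    "snd x p < snd (restrict_word y T) p'"
    using str_lessE[OF s] by blast
  have p'T: "p' \<in> T" "p' \<in> Field (fst y)" using pp(2) wy by auto
  show ?thesis using pp restrict_below_init[OF T p'T(1) wy] p'T by (intro str_lessI[of p _ p']) auto
qed

lemma str_restr_left:
  assumes s: "str_less (restrict_word y T) x" and T: "init_seg y T" and wy: "Well_order (fst y)"
  shows "str_less y x"
proof -
  obtain p p' where pp: "p \<in> Field (fst (restrict_word y T))" "p' \<in> Field (fst x)"
    "word_eq (restrict_word (restrict_word y T) (below (restrict_word y T) p)) (restrict_word x (below x p'))"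
    "snd (restrict_word y T) p < snd x p'"
    using str_lessE[OF s] by blast
  have pT: "p \<in> T" "p \<in> Field (fst y)" using pp(1) wy by auto
  show ?thesis using pp restrict_below_init[OF T pT(1) wy] pT by (intro str_lessI[of p _ p']) auto
qed

lemma str_ext_right:
  assumes "str_less x y" "is_prefix y y'" "Well_order (fst y)" "Well_order (fst y')"
  shows "str_less x y'"
proof -
  obtain T where T: "init_seg y' T" "word_eq y (restrict_word y' T)" using assms(2) is_prefix_def by blast
  have "str_less x (restrict_word y' T)" using str_eq_right[OF assms(1) T(2) assms(3)] assms(4) by simp
  then show ?thesis using str_restr_right T(1) assms(4) by blast
qed

lemma str_ext_left:
  assumes "str_less x y" "is_prefix x x'" "Well_order (fst x)" "Well_order (fst x')"
  shows "str_less x' y"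
proof -
  obtain T where T: "init_seg x' T" "word_eq x (restrict_word x' T)" using assms(2) is_prefix_def by blast
  have "str_less (restrict_word x' T) y" using str_eq_left[OF assms(1) T(2) assms(3)] assms(4) by simp
  then show ?thesis using str_restr_left T(1) assms(4) by blast
qed

lemma str_same_init:
  assumes wo: "Well_order (fst x)" and L: "init_seg x L" and L': "init_seg x L'"
  shows "\<not> str_less (restrict_word x L) (restrict_word x L')"
proof
  assume "str_less (restrict_word x L) (restrict_word x L')"
  then obtain p p' where pp: "p \<in> Field (fst (restrict_word x L))" "p' \<in> Field (fst (restrict_word x L'))"
    "word_eq (restrict_word (restrict_word x L) (below (restrict_word x L) p)) (restrict_word (restrict_word x L') (below (restrict_word x L') p'))"
    "snd (restrict_word x L) p < snd (restrict_word x L') p'"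
    using str_lessE by blast
  have pL: "p \<in> L" "p \<in> Field (fst x)" "p' \<in> L'" "p' \<in> Field (fst x)" using pp wo by auto
  have "word_eq (restrict_word x (below x p)) (restrict_word x (below x p'))"
    using pp(3) restrict_below_init[OF L pL(1) wo] restrict_below_init[OF L' pL(3) wo] by simp
  then have "below x p = below x p'" using init_seg_eq_uniq[OF wo init_seg_below[OF wo] init_seg_below[OF wo]] by blast
  then have "p = p'" using below_inj[OF wo pL(2) pL(4)] by blast
  then show False using pp(4) by simp
qed

lemma prefix_not_str:
  assumes p: "is_prefix x y" and wx: "Well_order (fst x)" and wy: "Well_order (fst y)"
  shows "\<not> str_less y x"
proof
  assume s: "str_less y x"
  obtain S where S: "init_seg y S" "word_eq x (restrict_word y S)" using p is_prefix_def by blast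
  have "str_less y (restrict_word y S)" using str_eq_right[OF s S(2) wx] wy by simp
  then have "str_less (restrict_word y (Field (fst y))) (restrict_word y S)" using restrict_Field_self by metis
  then show False using str_same_init[OF wy init_seg_Field S(1)] by blast
qed

lemma iso_init_pos:
  assumes k: "wiso (restrict_word x S) (restrict_word y T) k" and wx: "Well_order (fst x)" and wy: "Well_order (fst y)"
    and S: "init_seg x S" and T: "init_seg y T" and c: "c \<in> S"
  shows "word_eq (restrict_word x (below x c)) (restrict_word y (below y (k c)))"
    "k c \<in> T" "snd y (k c) = snd x c"
proof -
  have SF: "S \<subseteq> Field (fst x)" "T \<subseteq> Field (fst y)" using S T by (auto simp: init_seg_def)
  have cF: "c \<in> Field (fst (restrict_word x S))" using c SF wx by auto
  have kc: "k c \<in> Field (fst (restrict_word y T))" using wisoD(6)[OF k cF] .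
  then show kT: "k c \<in> T" using wy by auto
  have "wiso (restrict_word (restrict_word x S) (below (restrict_word x S) c))
             (restrict_word (restrict_word y T) (below (restrict_word y T) (k c))) k"
    using wiso_below_eq[OF k WO_restrict[OF wx] WO_restrict[OF wy] cF] .
  then show "word_eq (restrict_word x (below x c)) (restrict_word y (below y (k c)))"
    using restrict_below_init[OF S c wx] restrict_below_init[OF T kT wy] word_eq_iff by metis
  show "snd y (k c) = snd x c" using wisoD(3)[OF k cF] by simp
qed

lemma str_asym:
  assumes wx: "Well_order (fst x)" and wy: "Well_order (fst y)"
    and s1: "str_less x y" and s2: "str_less y x"
  shows False
proof -
  obtain p p' where pp: "p \<in> Field (fst x)" "p' \<in> Field (fst y)"
    "word_eq (restrict_word x (below x p)) (restrict_word y (below y p'))" "snd x p < snd y p'"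
    using str_lessE[OF s1] by blast
  obtain q q' where qq: "q \<in> Field (fst y)" "q' \<in> Field (fst x)"
    "word_eq (restrict_word y (below y q)) (restrict_word x (below x q'))" "snd y q < snd x q'"
    using str_lessE[OF s2] by blast
  have bx: "\<And>a. init_seg x (below x a)" using init_seg_below[OF wx] .
  have by': "\<And>a. init_seg y (below y a)" using init_seg_below[OF wy] .
  have uy: "\<And>a b. a \<in> Field (fst y) \<Longrightarrow> b \<in> Field (fst y) \<Longrightarrow>
      word_eq (restrict_word y (below y a)) (restrict_word y (below y b)) \<Longrightarrow> a = b"
    using init_seg_eq_uniq[OF wy by' by'] below_inj[OF wy] by blast
  consider "p = q'" | "(p, q') \<in> fst x" "p \<noteq> q'" | "(q', p) \<in> fst x" "q' \<noteq> p"
    using WO_total[OF wx pp(1) qq(2)] by blast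
  then show False
  proof cases
    case 1
    then have "word_eq (restrict_word y (below y q)) (restrict_word y (below y p'))"
      using qq(3) pp(3) word_eq_trans by blast
    then have "q = p'" using uy qq(1) pp(2) by blast
    then show False using pp(4) qq(4) 1 by simp
  next
    case 2
    then have pb: "p \<in> below x q'" by (auto simp: below_def)
    obtain k where k: "wiso (restrict_word x (below x q')) (restrict_word y (below y q)) k"
      using qq(3) word_eq_sym word_eq_iff by blast
    note kk = iso_init_pos[OF k wx wy bx by' pb]
    have kF: "k p \<in> Field (fst y)" using kk(2) below_Field[of y q] by blast
    have "word_eq (restrict_word y (below y (k p))) (restrict_word y (below y p'))"
      using kk(1) pp(3) word_eq_trans word_eq_sym by blast
    then have "k p = p'" using uy kF pp(2) by blast
    then show False using kk(3) pp(4) by simp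
  next
    case 3
    then have pb: "q' \<in> below x p" by (auto simp: below_def)
    obtain g where g: "wiso (restrict_word x (below x p)) (restrict_word y (below y p')) g"
      using pp(3) word_eq_iff by blast
    note gg = iso_init_pos[OF g wx wy bx by' pb]
    have gF: "g q' \<in> Field (fst y)" using gg(2) below_Field[of y p'] by blast
    have "word_eq (restrict_word y (below y (g q'))) (restrict_word y (below y q))"
      using gg(1) qq(3) word_eq_trans word_eq_sym by blast
    then have "g q' = q" using uy gF qq(1) by blast
    then show False using gg(3) qq(4) by simp
  qed
qed

lemma prefix_str:
  assumes p: "is_prefix x y" and s: "str_less y z"
    and wx: "Well_order (fst x)" and wy: "Well_order (fst y)" and wz: "Well_order (fst z)"
  shows "is_prefix x z \<or> str_less x z"
proof -
  obtain S where S: "init_seg y S" "word_eq x (restrict_word y S)" using p is_prefix_def by blast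
  obtain q q' where qq: "q \<in> Field (fst y)" "q' \<in> Field (fst z)"
    "word_eq (restrict_word y (below y q)) (restrict_word z (below z q'))" "snd y q < snd z q'"
    using str_lessE[OF s] by blast
  show ?thesis
  proof (cases "q \<in> S")
    case True
    have "str_less (restrict_word y S) z"
      using qq True restrict_below_init[OF S(1) True wy] wy by (intro str_lessI[of q _ q']) auto
    then have "str_less x z" using str_eq_left[OF _ word_eq_sym[OF S(2)] WO_restrict[OF wy] wx] by blast
    then show ?thesis by blast
  next
    case False
    have sub: "S \<subseteq> below y q" using init_seg_not_in[OF wy S(1) qq(1) False] .
    have "is_prefix (restrict_word y S) (restrict_word y (below y q))"
      using prefix_subset[OF S(1) init_seg_below[OF wy] sub wy] .
    then have "is_prefix x (restrict_word y (below y q))" using prefix_eq_left[OF S(2)] by blast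
    then have "is_prefix x (restrict_word z (below z q'))"
      using prefix_eq_right[OF qq(3) _ WO_restrict[OF wy] WO_restrict[OF wz]] by blast
    moreover have "is_prefix (restrict_word z (below z q')) z" using prefix_restrict[OF init_seg_below[OF wz]] .
    ultimately have "is_prefix x z" using prefix_trans[OF _ _ WO_restrict[OF wz] wz] by blast
    then show ?thesis by blast
  qed
qed

section \<open>Lexicographic order\<close>

lemma lex_le_eq:
  assumes "lex_le x y" "word_eq x x'" "word_eq y y'"
    "Well_order (fst x)" "Well_order (fst x')" "Well_order (fst y)" "Well_order (fst y')"
  shows "lex_le x' y'"
  using assms unfolding lex_le_def
  using prefix_eq_left[OF word_eq_sym[OF assms(2)]] prefix_eq_right[OF assms(3)]
    str_eq_left[OF _ assms(2)] str_eq_right[OF _ assms(3)] by blast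

lemma not_lex_le_shorter:
  assumes wo: "Well_order (fst x)" and M: "init_seg x M" and L: "init_seg x L" and n: "\<not> M \<subseteq> L"
  shows "\<not> lex_le (restrict_word x M) (restrict_word x L)"
  using prefix_uniq[OF wo M L] str_same_init[OF wo M L] n unfolding lex_le_def by blast

lemma lex_le_str_contra:
  assumes "lex_le P r" "str_less r P" "Well_order (fst P)" "Well_order (fst r)"
  shows False
  using assms prefix_not_str str_asym unfolding lex_le_def by blast

lemma lex_le_prefix_left:
  assumes "is_prefix x P" "lex_le P s" "Well_order (fst x)" "Well_order (fst P)" "Well_order (fst s)"
  shows "lex_le x s"
  using assms prefix_trans prefix_str unfolding lex_le_def by blast

lemma lex_less_pre:
  assumes wo: "Well_order (fst x)" and L': "init_seg x L'" and L: "init_seg x L"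
    and l: "lex_less (restrict_word x L') (restrict_word x L)"
  shows "L' \<subseteq> L \<and> L' \<noteq> L"
  using l prefix_uniq[OF wo L' L] str_same_init[OF wo L' L] word_eq_refl
  unfolding lex_less_def lex_le_def by blast

lemma lex_le_prefix_trans:
  assumes "lex_le a b" "is_prefix b c" "Well_order (fst a)" "Well_order (fst b)" "Well_order (fst c)"
  shows "is_prefix a c \<or> str_less a c"
  using assms prefix_trans str_ext_right unfolding lex_le_def by blast

lemma lex_less_eq:
  assumes "lex_less x y" "word_eq x x'" "word_eq y y'"
    "Well_order (fst x)" "Well_order (fst x')" "Well_order (fst y)" "Well_order (fst y')"
  shows "lex_less x' y'"
proof -
  have "lex_le x' y'" using lex_le_eq[of x y x' y'] assms unfolding lex_less_def by blast
  moreover have "\<not> word_eq x' y'"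
  proof
    assume "word_eq x' y'"
    then have "word_eq x y" using assms(2,3) word_eq_trans word_eq_sym by metis
    then show False using assms(1) unfolding lex_less_def by blast
  qed
  ultimately show ?thesis unfolding lex_less_def by blast
qed

lemma primitive_eq: "word_eq x x' \<Longrightarrow> primitive x \<Longrightarrow> primitive x'"
  unfolding primitive_def using word_eq_trans word_eq_sym by metis

lemma primitive_nonempty:
  fixes x :: "('p, 'a) word"
  assumes "primitive x"
  shows "Field (fst x) \<noteq> {}"
proof
  assume e: "Field (fst x) = {}"
  let ?A = "{} :: nat rel"
  let ?y = "({} :: nat rel, \<lambda>_. undefined) :: (nat, 'a) word"
  have wA: "Well_order ?A" by (simp add: well_order_on_def linear_order_on_def partial_order_on_def
        preorder_on_def refl_on_def trans_def antisym_def total_on_def)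
  have wy: "wf_word ?y" using wA by (simp add: wf_word_def)
  have "Field (fst (word_pow ?y ?A)) = {}" by (auto simp: word_pow_def word_prod_def Field_def)
  then have "word_eq x (word_pow ?y ?A)" using e by (simp add: word_eq_def bij_betw_def)
  then have "\<exists>i. Field ?A = {i}" using assms wA wy unfolding primitive_def by blast
  then show False by simp
qed

lemma prime_nonempty: "prime_word x \<Longrightarrow> Field (fst x) \<noteq> {}"
  using primitive_nonempty prime_word_def by blast

lemma prime_eq:
  assumes e: "word_eq x x'" and wx: "Well_order (fst x)" and wx': "Well_order (fst x')"
    and p: "prime_word x"
  shows "prime_word x'"
  unfolding prime_word_def
proof (intro conjI allI impI)
  show "primitive x'" using primitive_eq[OF e] p prime_word_def by blast
next
  fix S' assume S': "init_seg x' S' \<and> S' \<noteq> {} \<and> S' \<noteq> Field (fst x')"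
  obtain g where g: "wiso x' x g" using e word_eq_sym word_eq_iff by blast
  have b: "bij_betw g (Field (fst x')) (Field (fst x))" using wisoD(1)[OF g] .
  have S'F: "S' \<subseteq> Field (fst x')" using S' by (auto simp: init_seg_def)
  let ?S = "g ` S'"
  have S: "init_seg x ?S" using wiso_init_seg[OF g wx' wx] S' by blast
  have "?S \<noteq> {}" using S' by blast
  moreover have "?S \<noteq> Field (fst x)"
  proof
    assume "?S = Field (fst x)"
    then have "g ` S' = g ` Field (fst x')" using b by (simp add: bij_betw_def)
    then have "S' = Field (fst x')" using b S'F inj_on_image_eq_iff[of g "Field (fst x')" S' "Field (fst x')"]
      by (simp add: bij_betw_def)
    then show False using S' by blast
  qed
  ultimately have l: "lex_le x (restrict_word x (Field (fst x) - ?S))" using p S unfolding prime_word_def by blast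
  have "wiso (restrict_word x' (Field (fst x') - S')) (restrict_word x (g ` ((Field (fst x') - S') \<inter> Field (fst x')))) g"
    using wiso_restrict[OF g wx' wx] .
  moreover have "g ` ((Field (fst x') - S') \<inter> Field (fst x')) = Field (fst x) - ?S"
  proof -
    have "(Field (fst x') - S') \<inter> Field (fst x') = Field (fst x') - S'" by blast
    then show ?thesis using b S'F inj_on_image_set_diff[of g "Field (fst x')" "Field (fst x')" S']
      by (simp add: bij_betw_def)
  qed
  ultimately have "word_eq (restrict_word x (Field (fst x) - ?S)) (restrict_word x' (Field (fst x') - S'))"
    using word_eq_iff word_eq_sym by metis
  then show "lex_le x' (restrict_word x' (Field (fst x') - S'))"
    using lex_le_eq[OF l e _ wx wx' WO_restrict[OF wx] WO_restrict[OF wx']] by blast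
qed

section \<open>Products\<close>

lemma word_prod_rel: "((i,p),(j,q)) \<in> fst (word_prod B v) \<longleftrightarrow> i \<in> Field B \<and> j \<in> Field B \<and>
   p \<in> Field (fst (v i)) \<and> q \<in> Field (fst (v j)) \<and> ((i \<noteq> j \<and> (i,j) \<in> B) \<or> (i = j \<and> (p,q) \<in> fst (v i)))"
  by (simp add: word_prod_def)

lemma word_prod_snd[simp]: "snd (word_prod B v) (i,p) = snd (v i) p"
  by (simp add: word_prod_def)

lemma Field_word_prod:
  assumes "Well_order B" "\<forall>i\<in>Field B. Well_order (fst (v i))"
  shows "Field (fst (word_prod B v)) = Sigma (Field B) (\<lambda>i. Field (fst (v i)))"
proof
  show "Field (fst (word_prod B v)) \<subseteq> Sigma (Field B) (\<lambda>i. Field (fst (v i)))"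
    by (auto simp: Field_def word_prod_def)
next
  show "Sigma (Field B) (\<lambda>i. Field (fst (v i))) \<subseteq> Field (fst (word_prod B v))"
  proof
    fix z assume "z \<in> Sigma (Field B) (\<lambda>i. Field (fst (v i)))"
    then obtain i p where z: "z = (i,p)" "i \<in> Field B" "p \<in> Field (fst (v i))" by blast
    then have "(z,z) \<in> fst (word_prod B v)" using assms WO_refl[of "fst (v i)" p]
      by (simp add: word_prod_rel)
    then show "z \<in> Field (fst (word_prod B v))" by (auto simp: Field_def)
  qed
qed

lemma WO_word_prod:
  assumes wB: "Well_order B" and wv: "\<forall>i\<in>Field B. Well_order (fst (v i))"
  shows "Well_order (fst (word_prod B v))"
proof -
  let ?r = "fst (word_prod B v)"
  have F: "Field ?r = Sigma (Field B) (\<lambda>i. Field (fst (v i)))" using Field_word_prod[OF wB wv] .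
  have sub: "?r \<subseteq> Field ?r \<times> Field ?r" by (auto simp: Field_def)
  have refl: "refl_on (Field ?r) ?r"
    unfolding refl_on_def
  proof (intro ballI)
    fix z assume "z \<in> Field ?r"
    then obtain i p where "z = (i,p)" "i \<in> Field B" "p \<in> Field (fst (v i))" using F by blast
    then show "(z,z) \<in> ?r" using wv WO_refl[of "fst (v i)" p] by (simp add: word_prod_rel)
  qed
  have trans: "trans ?r"
    unfolding trans_def
  proof (intro allI impI)
    fix x y z assume xy: "(x,y) \<in> ?r" and yz: "(y,z) \<in> ?r"
    obtain i p j q k s where e: "x = (i,p)" "y = (j,q)" "z = (k,s)" by (cases x, cases y, cases z) auto
    show "(x,z) \<in> ?r"
      using xy yz wv WO_trans[OF wB, of i j k] WO_antisym[OF wB, of i j] WO_trans[of "fst (v i)" p q s]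
      unfolding e word_prod_rel by metis
  qed
  have antisym: "antisym ?r"
    unfolding antisym_def
  proof (intro allI impI)
    fix x y assume xy: "(x,y) \<in> ?r" and yx: "(y,x) \<in> ?r"
    obtain i p j q where e: "x = (i,p)" "y = (j,q)" by (cases x, cases y) auto
    show "x = y"
      using xy yx wv WO_antisym[OF wB, of i j] WO_antisym[of "fst (v i)" p q]
      unfolding e word_prod_rel by metis
  qed
  have total: "total_on (Field ?r) ?r"
    unfolding total_on_def
  proof (intro ballI impI)
    fix x y assume x: "x \<in> Field ?r" and y: "y \<in> Field ?r" and ne: "x \<noteq> y"
    obtain i p j q where e: "x = (i,p)" "y = (j,q)" by (cases x, cases y) auto
    have xx: "i \<in> Field B" "p \<in> Field (fst (v i))" "j \<in> Field B" "q \<in> Field (fst (v j))"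
      using x y F e by auto
    show "(x,y) \<in> ?r \<or> (y,x) \<in> ?r"
    proof (cases "i = j")
      case True
      then show ?thesis using xx wv WO_total[of "fst (v i)" p q] unfolding e word_prod_rel by auto
    next
      case False
      then show ?thesis using xx WO_total[OF wB, of i j] unfolding e word_prod_rel by auto
    qed
  qed
  have wf: "wf (?r - Id)"
  proof (rule wfI_min)
    fix x :: "'a \<times> 'b" and Q assume xQ: "x \<in> Q"
    show "\<exists>z\<in>Q. \<forall>y. (y, z) \<in> ?r - Id \<longrightarrow> y \<notin> Q"
    proof (cases "Q \<inter> Field ?r = {}")
      case True
      then show ?thesis using xQ by (auto simp: Field_def)
    next
      case False
      let ?I = "{i. \<exists>p. (i,p) \<in> Q \<inter> Field ?r}"
      obtain z where zQ: "z \<in> Q \<inter> Field ?r" using False by blast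
      then have zI: "fst z \<in> ?I" by (cases z) auto
      have IF: "?I \<subseteq> Field B" using F by auto
      obtain i0 where i0: "i0 \<in> ?I" "\<forall>i\<in>?I. (i0,i) \<in> B"
        using WO_min[OF wB IF zI] by blast
      let ?P = "{p. (i0,p) \<in> Q \<inter> Field ?r}"
      have i0F: "i0 \<in> Field B" using i0(1) F by auto
      obtain p0 where p0: "p0 \<in> ?P" "\<forall>p\<in>?P. (p0,p) \<in> fst (v i0)"
        using WO_min[of "fst (v i0)" ?P] wv i0F i0(1) F by blast
      show ?thesis
      proof (intro bexI[of _ "(i0,p0)"] allI impI)
        show "(i0,p0) \<in> Q" using p0 by blast
      next
        fix y assume y: "(y, (i0,p0)) \<in> ?r - Id"
        obtain j q where e: "y = (j,q)" by (cases y) auto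
        show "y \<notin> Q"
        proof
          assume yQ: "y \<in> Q"
          have yF: "y \<in> Field ?r" using y by (auto simp: Field_def)
          have "j \<in> ?I" using yQ yF e by blast
          then have ij: "(i0, j) \<in> B" using i0 by blast
          have "((j,q),(i0,p0)) \<in> ?r" using y e by simp
          then have "j = i0" using ij WO_antisym[OF wB, of i0 j] by (auto simp: word_prod_rel)
          then have "q \<in> ?P" using yQ yF e by blast
          then have "(p0, q) \<in> fst (v i0)" using p0 by blast
          moreover have "((j,q),(i0,p0)) \<in> ?r" "q \<noteq> p0" using y e \<open>j = i0\<close> by auto
          ultimately show False using \<open>j = i0\<close> WO_antisym[of "fst (v i0)" p0 q] wv i0F
            by (auto simp: word_prod_rel)
        qed
      qed
    qed
  qed
  show ?thesis
    unfolding well_order_on_def linear_order_on_def partial_order_on_def preorder_on_def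
    using sub refl trans antisym total wf by blast
qed

lemma dir_image_mem:
  assumes "inj_on f (Field r)" "a \<in> Field r" "b \<in> Field r"
  shows "(f a, f b) \<in> dir_image r f \<longleftrightarrow> (a,b) \<in> r"
proof
  assume "(f a, f b) \<in> dir_image r f"
  then obtain a' b' where ab: "(a',b') \<in> r" "f a = f a'" "f b = f b'" by (auto simp: dir_image_def)
  have "a' \<in> Field r" "b' \<in> Field r" using ab(1) by (auto simp: Field_def)
  then have "a = a'" "b = b'" using assms ab by (auto dest: inj_onD)
  then show "(a,b) \<in> r" using ab by simp
qed (auto simp: dir_image_def)

locale setting =
  fixes A :: "'i rel" and u :: "'i \<Rightarrow> ('p, 'a::{finite, linorder}) word" and b0 :: 'i
  assumes WA: "Well_order A" and cA: "countable (Field A)"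
    and b0F: "b0 \<in> Field A" and b0min: "\<forall>b\<in>Field A. (b0, b) \<in> A"
    and wfu: "\<forall>b\<in>Field A. wf_word (u b) \<and> prime_word (u b)"
    and dn: "dense_nonincr A u"
begin

definition "w = word_prod A u"
definition "blk b = {b} \<times> Field (fst (u b))"

lemma Wu: "b \<in> Field A \<Longrightarrow> Well_order (fst (u b))"
  using wfu by (auto simp: wf_word_def)

lemma Ww: "Well_order (fst w)"
  unfolding w_def using WO_word_prod[OF WA] Wu by blast

lemma Wr: "Well_order (fst (restrict_word w X))"
  using WO_restrict[OF Ww] .

lemma Fw: "Field (fst w) = Sigma (Field A) (\<lambda>i. Field (fst (u i)))"
  unfolding w_def using Field_word_prod[OF WA] Wu by blast

lemma Rw: "((i,p),(j,q)) \<in> fst w \<longleftrightarrow> i \<in> Field A \<and> j \<in> Field A \<and>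
   p \<in> Field (fst (u i)) \<and> q \<in> Field (fst (u j)) \<and> ((i \<noteq> j \<and> (i,j) \<in> A) \<or> (i = j \<and> (p,q) \<in> fst (u i)))"
  unfolding w_def by (rule word_prod_rel)

lemma lab[simp]: "snd w (i,p) = snd (u i) p"
  unfolding w_def by simp

lemma Rw_fst: "(x, y) \<in> fst w \<Longrightarrow> (fst x, fst y) \<in> A"
  using Rw[of "fst x" "snd x" "fst y" "snd y"] WO_refl[OF WA] by auto

lemma blk_sub': "b \<in> Field A \<Longrightarrow> blk b \<subseteq> Field (fst w)"
  using Fw by (auto simp: blk_def)

lemma Field_blk: "b \<in> Field A \<Longrightarrow> Field (fst (restrict_word w (blk b))) = blk b"
  using blk_sub'[of b] Ww by auto

lemma blk_iso:
  assumes b: "b \<in> Field A"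
  shows "wiso (u b) (restrict_word w (blk b)) (\<lambda>p. (b,p))"
  unfolding wiso_def
proof (intro conjI ballI)
  show "bij_betw (\<lambda>p. (b, p)) (Field (fst (u b))) (Field (fst (restrict_word w (blk b))))"
    unfolding Field_blk[OF b] by (auto simp: bij_betw_def inj_on_def blk_def)
next
  fix p q assume "p \<in> Field (fst (u b))" "q \<in> Field (fst (u b))"
  then show "(p, q) \<in> fst (u b) \<longleftrightarrow> ((b, p), (b, q)) \<in> fst (restrict_word w (blk b))"
    using b by (auto simp: Rw blk_def)
qed simp

lemma blk_eq: "b \<in> Field A \<Longrightarrow> word_eq (u b) (restrict_word w (blk b))"
  using blk_iso word_eq_iff by blast

lemma blk_eq_blk:
  "word_eq (u b) (u b') \<Longrightarrow> b \<in> Field A \<Longrightarrow> b' \<in> Field A \<Longrightarrow>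
   word_eq (restrict_word w (blk b)) (restrict_word w (blk b'))"
  using blk_eq word_eq_trans word_eq_sym by metis

lemma blk_lex_less:
  "lex_less (u b') (u b) \<Longrightarrow> b \<in> Field A \<Longrightarrow> b' \<in> Field A \<Longrightarrow>
   lex_less (restrict_word w (blk b')) (restrict_word w (blk b))"
  using lex_less_eq[OF _ blk_eq blk_eq Wu Wr Wu Wr] by blast

lemma B0_init: "init_seg w (blk b0)"
  unfolding init_seg_def
proof (intro conjI ballI allI impI)
  show "blk b0 \<subseteq> Field (fst w)" using blk_sub'[OF b0F] .
next
  fix p q assume p: "p \<in> blk b0" and qp: "(q, p) \<in> fst w"
  obtain j s where q: "q = (j,s)" by (cases q)
  obtain i t where pe: "p = (i,t)" by (cases p)
  have qp': "((j,s),(i,t)) \<in> fst w" using qp q pe by simp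
  have i: "i = b0" using p pe by (auto simp: blk_def)
  have "(j, b0) \<in> A" "j \<in> Field A" "s \<in> Field (fst (u j))" using qp' i WO_refl[OF WA b0F] unfolding Rw by auto
  then have "j = b0" using b0min WO_antisym[OF WA] by blast
  then show "q \<in> blk b0" using \<open>s \<in> Field (fst (u j))\<close> q by (auto simp: blk_def)
qed

lemma prime_u: "b \<in> Field A \<Longrightarrow> prime_word (u b)" using wfu by blast

lemma blk_nonempty: "b \<in> Field A \<Longrightarrow> blk b \<noteq> {}"
  using prime_nonempty[OF prime_u] by (auto simp: blk_def)

lemma prime_B0: "prime_word (restrict_word w (blk b0))"
  using prime_eq[OF blk_eq[OF b0F] Wu[OF b0F] Wr prime_u[OF b0F]] .

end

context setting begin

lemma DN:
  assumes g: "g \<in> Field A" and d: "d \<in> Field A" and gd: "(g,d) \<in> A"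
  shows "(\<forall>b\<in>Field A. (g,b) \<in> A \<and> (b,d) \<in> A \<longrightarrow> word_eq (u b) (u g)) \<or>
         (\<exists>b\<in>Field A. \<exists>b'\<in>Field A. (g,b) \<in> A \<and> (b',d) \<in> A \<and> (b,b') \<in> A \<and> b \<noteq> b' \<and> lex_less (u b') (u b))"
proof -
  define E where "E = {e\<in>Field A. (d,e) \<in> A \<and> e \<noteq> d}"
  define g' where "g' = (if E = {} then None else Some (SOME e. e \<in> E \<and> (\<forall>e'\<in>E. (e,e') \<in> A)))"
  have ivl: "ivl A g g' = {b\<in>Field A. (g,b) \<in> A \<and> (b,d) \<in> A}"
  proof (cases "E = {}")
    case True
    then have "\<forall>b\<in>Field A. (b,d) \<in> A" using WO_total[OF WA _ d] WO_refl[OF WA d] unfolding E_def by blast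
    then show ?thesis using True by (auto simp: ivl_def g'_def)
  next
    case False
    obtain e0 where "e0 \<in> E" "\<forall>e'\<in>E. (e0,e') \<in> A" using WO_min[OF WA, of E] False unfolding E_def by blast
    then have "\<exists>e. e \<in> E \<and> (\<forall>e'\<in>E. (e,e') \<in> A)" by blast
    then obtain e where e: "e \<in> E" "\<forall>e'\<in>E. (e,e') \<in> A" and ge: "g' = Some e"
      using someI_ex[of "\<lambda>e. e \<in> E \<and> (\<forall>e'\<in>E. (e,e') \<in> A)"] False unfolding g'_def by auto
    have eE: "e \<in> Field A" "(d,e) \<in> A" "e \<noteq> d" using e(1) unfolding E_def by auto
    have "\<And>b. b \<in> Field A \<Longrightarrow> ((b,e) \<in> A \<and> b \<noteq> e) \<longleftrightarrow> (b,d) \<in> A"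
    proof
      fix b assume b: "b \<in> Field A" and be: "(b,e) \<in> A \<and> b \<noteq> e"
      show "(b,d) \<in> A"
      proof (rule ccontr)
        assume "(b,d) \<notin> A"
        then have "(d,b) \<in> A" "b \<noteq> d" using WO_total[OF WA b d] WO_refl[OF WA d] by auto
        then have "b \<in> E" using b unfolding E_def by blast
        then have "(e,b) \<in> A" using e by blast
        then show False using be WO_antisym[OF WA] by blast
      qed
    next
      fix b assume b: "b \<in> Field A" and bd: "(b,d) \<in> A"
      show "(b,e) \<in> A \<and> b \<noteq> e"
        using WO_trans[OF WA bd eE(2)] WO_antisym[OF WA, of d e] bd eE by blast
    qed
    then show ?thesis using ge by (auto simp: ivl_def)
  qed
  have cond: "case g' of None \<Rightarrow> True | Some e \<Rightarrow> e \<in> Field A \<and> (g, e) \<in> A \<and> g \<noteq> e"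
  proof (cases "E = {}")
    case True then show ?thesis by (simp add: g'_def)
  next
    case False
    obtain e0 where "e0 \<in> E" "\<forall>e'\<in>E. (e0,e') \<in> A" using WO_min[OF WA, of E] False unfolding E_def by blast
    then have "\<exists>e. e \<in> E \<and> (\<forall>e'\<in>E. (e,e') \<in> A)" by blast
    then obtain e where e: "e \<in> E" and ge: "g' = Some e"
      using someI_ex[of "\<lambda>e. e \<in> E \<and> (\<forall>e'\<in>E. (e,e') \<in> A)"] False unfolding g'_def by auto
    have eE: "e \<in> Field A" "(d,e) \<in> A" "e \<noteq> d" using e(1) unfolding E_def by auto
    have "(g,e) \<in> A" using WO_trans[OF WA gd eE(2)] .
    moreover have "g \<noteq> e" using WO_antisym[OF WA, of d e] gd eE by blast
    ultimately show ?thesis using ge eE by simp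
  qed
  have "(\<forall>b\<in>ivl A g g'. word_eq (u b) (u g)) \<or>
       (\<exists>b\<in>ivl A g g'. \<exists>b'\<in>ivl A g g'. (b, b') \<in> A \<and> b \<noteq> b' \<and> lex_less (u b') (u b))"
    using dn g cond unfolding dense_nonincr_def by blast
  then show ?thesis unfolding ivl by blast
qed

lemma NP:
  assumes J: "J \<subseteq> Field A" "j1 \<in> J" "j2 \<in> J" "j1 \<noteq> j2"
    and eqs: "\<forall>s\<in>J. word_eq (u s) (u j1)"
  shows "\<not> primitive (restrict_word w (Sigma J (\<lambda>i. Field (fst (u i)))))"
proof
  let ?X = "Sigma J (\<lambda>i. Field (fst (u i)))"
  assume prim: "primitive (restrict_word w ?X)"
  have "\<forall>s\<in>J. \<exists>f. wiso (u s) (u j1) f" using eqs word_eq_iff by blast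
  then obtain gi where gi: "\<And>s. s \<in> J \<Longrightarrow> wiso (u s) (u j1) (gi s)" by metis
  define eA where "eA = to_nat_on (Field A)"
  have ieA: "inj_on eA (Field A)" using cA unfolding eA_def by (rule inj_on_to_nat_on)
  define Fy where "Fy = Field (fst (u j1))"
  have j1F: "j1 \<in> Field A" using J by blast
  have cFy: "countable Fy" using wfu j1F unfolding Fy_def wf_word_def by blast
  define ey where "ey = to_nat_on Fy"
  have iey: "inj_on ey Fy" using cFy unfolding ey_def by (rule inj_on_to_nat_on)
  define A' where "A' = dir_image (Restr A J) eA"
  define y' where "y' = ((dir_image (fst (u j1)) ey, \<lambda>n. snd (u j1) (inv_into Fy ey n)) :: (nat, 'a) word)"
  have FRJ: "Field (Restr A J) = J" using J(1) Field_Restr_WO[OF WA, of J] by blast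
  have ieAJ: "inj_on eA (Field (Restr A J))" using ieA J(1) FRJ by (metis inj_on_subset)
  have WA': "Well_order A'" unfolding A'_def using Well_order_dir_image[OF Well_order_Restr[OF WA] ieAJ] .
  have FA': "Field A' = eA ` J" unfolding A'_def dir_image_Field FRJ ..
  have Wj1: "Well_order (fst (u j1))" using Wu[OF j1F] .
  have Wy': "Well_order (fst y')" unfolding y'_def using Well_order_dir_image[OF Wj1] iey Fy_def by simp
  have Fy': "Field (fst y') = ey ` Fy" unfolding y'_def Fy_def by (simp add: dir_image_Field)
  have wy': "wf_word y'" unfolding wf_word_def using Wy' by simp
  let ?P = "word_pow y' A'"
  have FP: "Field (fst ?P) = Sigma (eA ` J) (\<lambda>_. ey ` Fy)"
    unfolding word_pow_def using Field_word_prod[OF WA', of "\<lambda>_. y'"] Wy' FA' Fy' by simp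
  have RP: "\<And>a m b n. ((a,m),(b,n)) \<in> fst ?P \<longleftrightarrow> a \<in> eA ` J \<and> b \<in> eA ` J \<and> m \<in> ey ` Fy \<and> n \<in> ey ` Fy \<and>
      ((a \<noteq> b \<and> (a,b) \<in> A') \<or> (a = b \<and> (m,n) \<in> dir_image (fst (u j1)) ey))"
    unfolding word_pow_def word_prod_rel FA' Fy' by (simp add: y'_def)
  define phi where "phi = (\<lambda>(i,p). (eA i, ey (gi i p)))"
  have XF: "?X \<subseteq> Field (fst w)" using Fw J(1) by auto
  have FX: "Field (fst (restrict_word w ?X)) = ?X" using XF Ww by auto
  have giF: "\<And>i p. i \<in> J \<Longrightarrow> p \<in> Field (fst (u i)) \<Longrightarrow> gi i p \<in> Fy"
    using wisoD(6)[OF gi] Fy_def by blast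
  have iso: "wiso (restrict_word w ?X) ?P phi"
    unfolding wiso_def FX FP
  proof (intro conjI ballI)
    show "bij_betw phi ?X (Sigma (eA ` J) (\<lambda>_. ey ` Fy))"
      unfolding bij_betw_def
    proof
      show "inj_on phi ?X"
      proof (rule inj_onI)
        fix x y assume x: "x \<in> ?X" and y: "y \<in> ?X" and e: "phi x = phi y"
        obtain i p j q where xy: "x = (i,p)" "y = (j,q)" by (cases x, cases y) auto
        have ij: "i \<in> J" "j \<in> J" "p \<in> Field (fst (u i))" "q \<in> Field (fst (u j))" using x y xy by auto
        have "eA i = eA j" using e xy by (simp add: phi_def)
        then have "i = j" using ieA ij J(1) by (auto dest: inj_onD)
        have "ey (gi i p) = ey (gi i q)" using e xy \<open>i = j\<close> by (simp add: phi_def)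
        then have "gi i p = gi i q" using iey giF ij \<open>i = j\<close> by (auto dest: inj_onD)
        then have "p = q" using wisoD(5)[OF gi[OF ij(1)]] ij \<open>i = j\<close> by (auto dest: inj_onD)
        then show "x = y" using xy \<open>i = j\<close> by simp
      qed
    next
      show "phi ` ?X = Sigma (eA ` J) (\<lambda>_. ey ` Fy)"
      proof
        show "phi ` ?X \<subseteq> Sigma (eA ` J) (\<lambda>_. ey ` Fy)" using giF by (auto simp: phi_def)
      next
        show "Sigma (eA ` J) (\<lambda>_. ey ` Fy) \<subseteq> phi ` ?X"
        proof
          fix z assume "z \<in> Sigma (eA ` J) (\<lambda>_. ey ` Fy)"
          then obtain i t where it: "i \<in> J" "t \<in> Fy" "z = (eA i, ey t)" by blast
          have "t \<in> gi i ` Field (fst (u i))" using wisoD(4)[OF gi[OF it(1)]] it(2) Fy_def by simp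
          then obtain p where "p \<in> Field (fst (u i))" "t = gi i p" by blast
          then show "z \<in> phi ` ?X" using it by (auto simp: phi_def intro!: image_eqI[of _ _ "(i,p)"])
        qed
      qed
    qed
  next
    fix x y assume x: "x \<in> ?X" and y: "y \<in> ?X"
    obtain i p j q where xy: "x = (i,p)" "y = (j,q)" by (cases x, cases y) auto
    have ij: "i \<in> J" "j \<in> J" "p \<in> Field (fst (u i))" "q \<in> Field (fst (u j))" using x y xy by auto
    have ijF: "i \<in> Field A" "j \<in> Field A" using ij J(1) by auto
    have L: "(x, y) \<in> fst (restrict_word w ?X) \<longleftrightarrow> ((i \<noteq> j \<and> (i,j) \<in> A) \<or> (i = j \<and> (p,q) \<in> fst (u i)))"
    proof -
      have "(x, y) \<in> fst (restrict_word w ?X) \<longleftrightarrow> ((i,p),(j,q)) \<in> fst w" using x y xy by simp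
      also have "\<dots> \<longleftrightarrow> ((i \<noteq> j \<and> (i,j) \<in> A) \<or> (i = j \<and> (p,q) \<in> fst (u i)))"
        unfolding Rw using ij ijF by blast
      finally show ?thesis .
    qed
    have e1: "eA i = eA j \<longleftrightarrow> i = j" using ieA ijF by (auto dest: inj_onD)
    have e2: "(eA i, eA j) \<in> A' \<longleftrightarrow> (i,j) \<in> A"
      unfolding A'_def using dir_image_mem[OF ieAJ, of i j] FRJ ij by auto
    have e3: "i = j \<Longrightarrow> (ey (gi i p), ey (gi j q)) \<in> dir_image (fst (u j1)) ey \<longleftrightarrow> (p,q) \<in> fst (u i)"
    proof -
      assume "i = j"
      have "(ey (gi i p), ey (gi i q)) \<in> dir_image (fst (u j1)) ey \<longleftrightarrow> (gi i p, gi i q) \<in> fst (u j1)"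
        using dir_image_mem[of ey "fst (u j1)" "gi i p" "gi i q"] iey giF ij \<open>i = j\<close> Fy_def by auto
      also have "\<dots> \<longleftrightarrow> (p,q) \<in> fst (u i)" using wisoD(2)[OF gi[OF ij(1)]] ij \<open>i = j\<close> by auto
      finally show ?thesis using \<open>i = j\<close> by simp
    qed
    have R: "(phi x, phi y) \<in> fst ?P \<longleftrightarrow> ((eA i \<noteq> eA j \<and> (eA i, eA j) \<in> A') \<or>
         (eA i = eA j \<and> (ey (gi i p), ey (gi j q)) \<in> dir_image (fst (u j1)) ey))"
    proof -
      have pe: "(phi x, phi y) = ((eA i, ey (gi i p)), (eA j, ey (gi j q)))" by (simp add: phi_def xy)
      have m: "eA i \<in> eA ` J" "eA j \<in> eA ` J" "ey (gi i p) \<in> ey ` Fy" "ey (gi j q) \<in> ey ` Fy"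
        using ij giF by auto
      show ?thesis unfolding pe RP using m by blast
    qed
    show "(x, y) \<in> fst (restrict_word w ?X) \<longleftrightarrow> (phi x, phi y) \<in> fst ?P"
      unfolding L R using e1 e2 e3 by blast
  next
    fix x assume x: "x \<in> ?X"
    obtain i p where xy: "x = (i,p)" by (cases x) auto
    have ij: "i \<in> J" "p \<in> Field (fst (u i))" using x xy by auto
    have "snd ?P (phi x) = snd y' (ey (gi i p))" by (simp add: word_pow_def phi_def xy)
    also have "\<dots> = snd (u j1) (gi i p)" unfolding y'_def using iey giF[OF ij] Fy_def by simp
    also have "\<dots> = snd (u i) p" using wisoD(3)[OF gi[OF ij(1)] ij(2)] .
    finally show "snd ?P (phi x) = snd (restrict_word w ?X) x" using xy by simp
  qed
  then have "word_eq (restrict_word w ?X) ?P" using word_eq_iff by blast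
  then have "\<exists>i. Field A' = {i}" using prim WA' wy' unfolding primitive_def by blast
  then obtain i where i: "Field A' = {i}" by blast
  have "eA j1 \<in> eA ` J" "eA j2 \<in> eA ` J" using J(2) J(3) by simp_all
  then have "eA j1 \<in> {i}" "eA j2 \<in> {i}" using i FA' by simp_all
  then have "eA j1 = eA j2" by simp
  moreover have "j1 \<in> Field A" "j2 \<in> Field A" using J by auto
  ultimately have "j1 = j2" using inj_onD[OF ieA] by blast
  then show False using J(4) by simp
qed

end

context setting begin

abbreviation "B0 \<equiv> blk b0"

lemma Field_rw: "Field (fst (restrict_word w X)) = X \<inter> Field (fst w)"
  using Ww by simp

lemma pre_L:
  assumes "is_prefix (restrict_word w X) (restrict_word w B0)"
  shows "\<exists>L. init_seg w L \<and> L \<subseteq> B0 \<and> word_eq (restrict_word w X) (restrict_word w L)"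
proof -
  obtain T where T: "init_seg (restrict_word w B0) T" "word_eq (restrict_word w X) (restrict_word (restrict_word w B0) T)"
    using assms is_prefix_def by blast
  have "init_seg w T" "T \<subseteq> B0" using init_seg_restr_trans[OF Ww B0_init T(1)] by auto
  moreover have "restrict_word (restrict_word w B0) T = restrict_word w T" using \<open>T \<subseteq> B0\<close> by (simp add: Int_absorb1)
  ultimately show ?thesis using T(2) by auto
qed

lemma L_pre: "init_seg w L \<Longrightarrow> L \<subseteq> B0 \<Longrightarrow> is_prefix (restrict_word w L) (restrict_word w B0)"
  using prefix_subset[OF _ B0_init _ Ww] by blast

lemma desc_contra:
  assumes b: "b \<in> Field A" and b': "b' \<in> Field A" and Lm: "init_seg w Lm"
    and eb: "word_eq (restrict_word w (blk b)) (restrict_word w Lm)"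
    and pb': "is_prefix (restrict_word w (blk b')) (restrict_word w B0)"
    and ll: "lex_less (u b') (u b)"
    and mn: "\<forall>L. init_seg w L \<and> L \<subseteq> B0 \<and> word_eq (restrict_word w (blk b')) (restrict_word w L) \<longrightarrow> Lm \<subseteq> L"
  shows False
proof -
  obtain L' where L': "init_seg w L'" "L' \<subseteq> B0" "word_eq (restrict_word w (blk b')) (restrict_word w L')"
    using pre_L[OF pb'] by blast
  have "Lm \<subseteq> L'" using mn L' by blast
  have "lex_less (restrict_word w (blk b')) (restrict_word w (blk b))" using blk_lex_less[OF ll b b'] .
  then have "lex_less (restrict_word w L') (restrict_word w Lm)"
    using lex_less_eq[OF _ L'(3) eb Wr Wr Wr Wr] by blast
  then have "L' \<subseteq> Lm \<and> L' \<noteq> Lm" using lex_less_pre[OF Ww L'(1) Lm] by blast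
  then show False using \<open>Lm \<subseteq> L'\<close> by blast
qed

lemma minlen:
  assumes QF: "Q \<subseteq> Field A" and Qdown: "\<forall>g\<in>Q. \<forall>d\<in>Field A. (d,g) \<in> A \<longrightarrow> d \<in> Q"
    and b0Q: "b0 \<in> Q" and Qpre: "\<forall>g\<in>Q. is_prefix (restrict_word w (blk g)) (restrict_word w B0)"
  shows "\<exists>gm Lm. gm \<in> Q \<and> init_seg w Lm \<and> Lm \<subseteq> B0 \<and>
     (\<forall>g\<in>Q. (gm,g) \<in> A \<longrightarrow> word_eq (restrict_word w (blk g)) (restrict_word w Lm)) \<and>
     (\<forall>g\<in>Q. \<forall>L. init_seg w L \<and> L \<subseteq> B0 \<and> word_eq (restrict_word w (blk g)) (restrict_word w L) \<longrightarrow> Lm \<subseteq> L) \<and>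
     (gm \<noteq> b0 \<longrightarrow> Lm \<noteq> B0)"
proof -
  define LL where "LL = {L. init_seg w L \<and> L \<subseteq> B0 \<and> (\<exists>g\<in>Q. word_eq (restrict_word w (blk g)) (restrict_word w L))}"
  have B0LL: "B0 \<in> LL" unfolding LL_def using B0_init b0Q word_eq_refl by blast
  define Lm where "Lm = \<Inter>LL"
  have LmB: "Lm \<subseteq> B0" using B0LL unfolding Lm_def by blast
  have LmLL: "Lm \<in> LL"
  proof (cases "B0 \<subseteq> Lm")
    case True
    then have "Lm = B0" using LmB by blast
    then show ?thesis using B0LL by simp
  next
    case False
    have sub: "B0 - Lm \<subseteq> Field (fst w)" using blk_sub'[OF b0F] by blast
    obtain c0 where "c0 \<in> B0 - Lm" using False by blast
    obtain c where c: "c \<in> B0 - Lm" "\<forall>e\<in>B0 - Lm. (c,e) \<in> fst w"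
      using WO_min[OF Ww sub \<open>c0 \<in> B0 - Lm\<close>] by blast
    obtain L0 where L0: "L0 \<in> LL" "c \<notin> L0" using c(1) unfolding Lm_def by blast
    have cF: "c \<in> Field (fst w)" using c(1) sub by blast
    have L0i: "init_seg w L0" using L0 unfolding LL_def by blast
    have "L0 \<subseteq> below w c" using init_seg_not_in[OF Ww L0i cF L0(2)] .
    moreover have "below w c \<subseteq> Lm"
    proof
      fix e assume e: "e \<in> below w c"
      have eB: "e \<in> B0" using e c(1) B0_init unfolding below_def init_seg_def by blast
      show "e \<in> Lm"
      proof (rule ccontr)
        assume "e \<notin> Lm"
        then have "(c,e) \<in> fst w" using c eB by blast
        moreover have "(e,c) \<in> fst w" "e \<noteq> c" using e unfolding below_def by auto
        ultimately show False using WO_antisym[OF Ww, of c e] by blast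
      qed
    qed
    moreover have "Lm \<subseteq> L0" using L0(1) unfolding Lm_def by blast
    ultimately have "Lm = L0" by blast
    then show ?thesis using L0 by simp
  qed
  have Lmi: "init_seg w Lm" and "\<exists>g\<in>Q. word_eq (restrict_word w (blk g)) (restrict_word w Lm)"
    using LmLL unfolding LL_def by auto
  then obtain g0 where g0: "g0 \<in> Q" "word_eq (restrict_word w (blk g0)) (restrict_word w Lm)" by blast
  define G where "G = {g\<in>Q. word_eq (restrict_word w (blk g)) (restrict_word w Lm)}"
  have GF: "G \<subseteq> Field A" using QF unfolding G_def by blast
  obtain gm where gm: "gm \<in> G" "\<forall>g\<in>G. (gm,g) \<in> A" using WO_min[OF WA GF, of g0] g0 unfolding G_def by blast
  have mn: "\<forall>g\<in>Q. \<forall>L. init_seg w L \<and> L \<subseteq> B0 \<and> word_eq (restrict_word w (blk g)) (restrict_word w L) \<longrightarrow> Lm \<subseteq> L"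
    unfolding Lm_def LL_def by blast
  have c3: "gm \<noteq> b0 \<longrightarrow> Lm \<noteq> B0"
  proof (intro impI notI)
    assume "gm \<noteq> b0" "Lm = B0"
    then have "b0 \<in> G" using b0Q word_eq_refl unfolding G_def by simp
    then have "(gm, b0) \<in> A" using gm by blast
    then show False using b0min WO_antisym[OF WA] gm(1) GF \<open>gm \<noteq> b0\<close> by blast
  qed
  have gmQ: "gm \<in> Q" using gm unfolding G_def by blast
  have tail: "\<forall>g\<in>Q. (gm,g) \<in> A \<longrightarrow> word_eq (restrict_word w (blk g)) (restrict_word w Lm)"
  proof (rule ccontr)
    assume nt: "\<not> ?thesis"
    define D where "D = {g\<in>Q. (gm,g) \<in> A \<and> \<not> word_eq (restrict_word w (blk g)) (restrict_word w Lm)}"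
    have DF: "D \<subseteq> Field A" using QF unfolding D_def by blast
    obtain d0 where "d0 \<in> D" using nt unfolding D_def by blast
    obtain d where d: "d \<in> D" "\<forall>g\<in>D. (d,g) \<in> A" using WO_min[OF WA DF \<open>d0 \<in> D\<close>] by blast
    have dQ: "d \<in> Q" "(gm,d) \<in> A" "\<not> word_eq (restrict_word w (blk d)) (restrict_word w Lm)" using d(1) unfolding D_def by auto
    have gmF: "gm \<in> Field A" "d \<in> Field A" using gmQ dQ QF by auto
    have egm: "word_eq (restrict_word w (blk gm)) (restrict_word w Lm)" using gm unfolding G_def by blast
    from DN[OF gmF(1) gmF(2) dQ(2)] show False
    proof
      assume "\<forall>b\<in>Field A. (gm, b) \<in> A \<and> (b, d) \<in> A \<longrightarrow> word_eq (u b) (u gm)"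
      then have "word_eq (u d) (u gm)" using gmF dQ WO_refl[OF WA] by blast
      then have "word_eq (restrict_word w (blk d)) (restrict_word w (blk gm))" using blk_eq_blk gmF by blast
      then show False using egm dQ(3) word_eq_trans by blast
    next
      assume "\<exists>b\<in>Field A. \<exists>b'\<in>Field A. (gm, b) \<in> A \<and> (b', d) \<in> A \<and> (b, b') \<in> A \<and> b \<noteq> b' \<and> lex_less (u b') (u b)"
      then obtain b b' where bb: "b \<in> Field A" "b' \<in> Field A" "(gm, b) \<in> A" "(b', d) \<in> A" "(b, b') \<in> A" "b \<noteq> b'"
        "lex_less (u b') (u b)" by blast
      have bd: "(b,d) \<in> A" using WO_trans[OF WA bb(5) bb(4)] .
      have bQ: "b \<in> Q" "b' \<in> Q" using Qdown dQ(1) bd bb by blast+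
      have "b \<noteq> d" using bb WO_antisym[OF WA] by blast
      then have "b \<notin> D" using d bd WO_antisym[OF WA] by blast
      then have eb: "word_eq (restrict_word w (blk b)) (restrict_word w Lm)" using bQ bb unfolding D_def by blast
      show False using desc_contra[OF bb(1) bb(2) Lmi eb] Qpre bQ mn bb(7) by blast
    qed
  qed
  show ?thesis using gmQ Lmi LmB tail mn c3 by blast
qed

end

locale ctx = setting +
  fixes S
  assumes Sinit: "init_seg w S" and Sprime: "prime_word (restrict_word w S)" and Snot: "\<not> S \<subseteq> blk b0"
begin

definition "I = {i. \<exists>p. (i,p) \<in> S}"
abbreviation "P \<equiv> restrict_word w S"
definition "SB b = {x\<in>S. (fst x, b) \<in> A \<and> fst x \<noteq> b}"

lemma SF: "S \<subseteq> Field (fst w)" using Sinit by (auto simp: init_seg_def)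

lemma FP: "Field (fst P) = S" using SF Ww by auto

lemma S_down: "x \<in> S \<Longrightarrow> (y,x) \<in> fst w \<Longrightarrow> y \<in> S"
  using Sinit unfolding init_seg_def by blast

lemma IF: "I \<subseteq> Field A" using SF Fw unfolding I_def by auto

lemma memS: "x \<in> S \<Longrightarrow> fst x \<in> I \<and> snd x \<in> Field (fst (u (fst x)))"
  using SF Fw unfolding I_def by (cases x) auto

lemma i1: "\<exists>i1\<in>I. i1 \<noteq> b0"
proof -
  obtain x where "x \<in> S" "x \<notin> blk b0" using Snot by blast
  then show ?thesis using memS[of x] unfolding blk_def by (cases x) auto
qed

lemma blk_in:
  assumes i: "i \<in> I" and j: "j \<in> Field A" and ji: "(j,i) \<in> A" "j \<noteq> i"
  shows "blk j \<subseteq> S"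
proof
  fix v assume v: "v \<in> blk j"
  obtain p where p: "(i,p) \<in> S" using i unfolding I_def by blast
  have pF: "p \<in> Field (fst (u i))" "i \<in> Field A" using memS[OF p] IF by auto
  obtain q where q: "v = (j,q)" "q \<in> Field (fst (u j))" using v unfolding blk_def by blast
  have "((j,q),(i,p)) \<in> fst w" unfolding Rw using j pF q ji by auto
  then show "v \<in> S" using S_down[OF p] q by simp
qed

lemma I_down: "i \<in> I \<Longrightarrow> j \<in> Field A \<Longrightarrow> (j,i) \<in> A \<Longrightarrow> j \<in> I"
  using blk_in[of i j] blk_nonempty[of j] unfolding blk_def I_def by (cases "j = i") auto

lemma b0I: "b0 \<in> I" using i1 I_down b0min b0F IF by blast

lemma B0S: "B0 \<subseteq> S"
  using i1 blk_in b0min b0F IF by blast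

lemma prime_suffix:
  assumes "init_seg P S0" "S0 \<noteq> {}" "S0 \<noteq> S"
  shows "lex_le P (restrict_word w (S - S0))"
proof -
  have "lex_le P (restrict_word P (Field (fst P) - S0))" using Sprime assms FP unfolding prime_word_def by blast
  moreover have "restrict_word P (Field (fst P) - S0) = restrict_word w (S - S0)" unfolding FP
    by (simp add: Int_absorb1 Diff_subset)
  ultimately show ?thesis by simp
qed

lemma suffix_contra:
  assumes "init_seg P S0" "S0 \<noteq> {}" "S0 \<noteq> S" "str_less (restrict_word w (S - S0)) P"
  shows False
  using lex_le_str_contra[OF prime_suffix[OF assms(1-3)] assms(4) Wr Wr] .

lemma B0_pref_P: "is_prefix (restrict_word w B0) P"
  using prefix_subset[OF B0_init Sinit B0S Ww] .

lemma SB_facts: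
  assumes b: "b \<in> I" "b \<noteq> b0"
  shows "init_seg P (SB b)" "SB b \<noteq> {}" "SB b \<noteq> S" "S - SB b = {x\<in>S. (b, fst x) \<in> A}"
proof -
  have bF: "b \<in> Field A" using b IF by blast
  show "init_seg P (SB b)"
    unfolding init_seg_restrict_iff[OF Ww Sinit]
  proof
    show "SB b \<subseteq> S" unfolding SB_def by blast
    show "init_seg w (SB b)"
      unfolding init_seg_def
    proof (intro conjI ballI allI impI)
      show "SB b \<subseteq> Field (fst w)" using SF unfolding SB_def by blast
    next
      fix x y assume x: "x \<in> SB b" and yx: "(y,x) \<in> fst w"
      have yS: "y \<in> S" using S_down x yx unfolding SB_def by blast
      have "(fst y, fst x) \<in> A" using Rw_fst[OF yx] .
      moreover have "(fst x, b) \<in> A" "fst x \<noteq> b" using x unfolding SB_def by auto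
      ultimately have "(fst y, b) \<in> A" "fst y \<noteq> b" using WO_trans[OF WA] WO_antisym[OF WA] by blast+
      then show "y \<in> SB b" using yS unfolding SB_def by blast
    qed
  qed
  obtain q where "q \<in> Field (fst (u b0))" using blk_nonempty[OF b0F] unfolding blk_def by blast
  then have "(b0,q) \<in> SB b" using B0S b0min bF b(2) unfolding SB_def blk_def by auto
  then show "SB b \<noteq> {}" by blast
  obtain p where p: "(b,p) \<in> S" using b unfolding I_def by blast
  then have "(b,p) \<notin> SB b" unfolding SB_def by simp
  then show "SB b \<noteq> S" using p by blast
  show "S - SB b = {x\<in>S. (b, fst x) \<in> A}"
  proof (intro set_eqI iffI)
    fix x assume "x \<in> S - SB b"
    then have xS: "x \<in> S" and nx: "\<not> ((fst x, b) \<in> A \<and> fst x \<noteq> b)" unfolding SB_def by auto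
    have "fst x \<in> Field A" using memS[OF xS] IF by blast
    then have "(b, fst x) \<in> A" using WO_total[OF WA bF] nx WO_refl[OF WA bF] by blast
    then show "x \<in> {x\<in>S. (b, fst x) \<in> A}" using xS by blast
  next
    fix x assume "x \<in> {x\<in>S. (b, fst x) \<in> A}"
    then show "x \<in> S - SB b" unfolding SB_def using WO_antisym[OF WA] by auto
  qed
qed

lemma part_pref_suffix:
  assumes b: "b \<in> I" "b \<noteq> b0"
  shows "is_prefix (restrict_word w (S \<inter> blk b)) (restrict_word w (S - SB b))"
proof -
  let ?X = "S - SB b" and ?Y = "S \<inter> blk b"
  have X: "?X = {x\<in>S. (b, fst x) \<in> A}" using SB_facts[OF b] by blast
  have bF: "b \<in> Field A" using b IF by blast
  have "init_seg (restrict_word w ?X) ?Y"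
    unfolding init_seg_def
  proof (intro conjI ballI allI impI)
    show "?Y \<subseteq> Field (fst (restrict_word w ?X))" unfolding Field_rw X using SF WO_refl[OF WA bF]
      by (auto simp: blk_def)
  next
    fix x y assume x: "x \<in> ?Y" and yx: "(y,x) \<in> fst (restrict_word w ?X)"
    then have yx': "(y,x) \<in> fst w" "y \<in> ?X" by auto
    have "(fst y, b) \<in> A" using Rw_fst[OF yx'(1)] x unfolding blk_def by auto
    moreover have "(b, fst y) \<in> A" using yx'(2) X by blast
    ultimately have "fst y = b" using WO_antisym[OF WA] by blast
    moreover have "y \<in> S" using yx' by blast
    ultimately show "y \<in> ?Y" using memS[of y] unfolding blk_def by (cases y) auto
  qed
  then have "is_prefix (restrict_word (restrict_word w ?X) ?Y) (restrict_word w ?X)" by (rule prefix_restrict)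
  moreover have "?X \<inter> ?Y = ?Y" unfolding X by (auto simp: blk_def WO_refl[OF WA bF])
  ultimately show ?thesis by simp
qed

lemma step1:
  assumes b: "b \<in> I" "b \<noteq> b0"
  shows "\<not> str_less (restrict_word w (S \<inter> blk b)) (restrict_word w B0)"
proof
  assume s: "str_less (restrict_word w (S \<inter> blk b)) (restrict_word w B0)"
  have "str_less (restrict_word w (S - SB b)) (restrict_word w B0)"
    using str_ext_left[OF s part_pref_suffix[OF b] Wr Wr] .
  then have "str_less (restrict_word w (S - SB b)) P" using str_ext_right[OF _ B0_pref_P Wr Wr] by blast
  then show False using suffix_contra SB_facts[OF b] by blast
qed

lemma part_blk_pref:
  assumes "b \<in> Field A"
  shows "is_prefix (restrict_word w (S \<inter> blk b)) (restrict_word w (blk b))"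
proof -
  have "init_seg (restrict_word w (blk b)) (S \<inter> blk b)"
    unfolding init_seg_def Field_rw using blk_sub'[OF assms] S_down by auto
  then have "is_prefix (restrict_word (restrict_word w (blk b)) (S \<inter> blk b)) (restrict_word w (blk b))"
    by (rule prefix_restrict)
  moreover have "blk b \<inter> (S \<inter> blk b) = S \<inter> blk b" by blast
  ultimately show ?thesis by simp
qed

lemma last_block:
  assumes k: "k \<in> I" "k \<noteq> b0" "\<forall>j\<in>I. (j,k) \<in> A"
    and pk: "is_prefix (restrict_word w (S \<inter> blk k)) (restrict_word w B0)"
  shows False
proof -
  have kF: "k \<in> Field A" using k IF by blast
  have "S - SB k = S \<inter> blk k"
  proof -
    have "{x\<in>S. (k, fst x) \<in> A} = S \<inter> blk k"
    proof (intro set_eqI iffI)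
      fix x assume x: "x \<in> {x\<in>S. (k, fst x) \<in> A}"
      then have "fst x \<in> I" using memS by blast
      then have "fst x = k" using x k(3) WO_antisym[OF WA] by blast
      then show "x \<in> S \<inter> blk k" using x memS[of x] unfolding blk_def by (cases x) auto
    qed (auto simp: blk_def WO_refl[OF WA kF])
    then show ?thesis using SB_facts[OF k(1,2)] by simp
  qed
  then have l: "lex_le P (restrict_word w (S \<inter> blk k))" using prime_suffix SB_facts[OF k(1,2)] by metis
  obtain L where L: "init_seg w L" "L \<subseteq> B0" "word_eq (restrict_word w (S \<inter> blk k)) (restrict_word w L)"
    using pre_L[OF pk] by blast
  have "lex_le P (restrict_word w L)" using lex_le_eq[OF l word_eq_refl L(3) Wr Wr Wr Wr] .
  moreover have "\<not> S \<subseteq> L" using L(2) Snot by blast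
  ultimately show False using not_lex_le_shorter[OF Ww Sinit L(1)] by blast
qed

end

context ctx begin

lemma claimA: "\<forall>b\<in>I. is_prefix (restrict_word w (S \<inter> blk b)) (restrict_word w B0)"
proof (rule ccontr)
  assume nt: "\<not> ?thesis"
  define D where "D = {b\<in>I. \<not> is_prefix (restrict_word w (S \<inter> blk b)) (restrict_word w B0)}"
  have DF: "D \<subseteq> Field A" using IF unfolding D_def by blast
  obtain d0 where "d0 \<in> D" using nt unfolding D_def by blast
  obtain b1 where b1: "b1 \<in> D" "\<forall>g\<in>D. (b1,g) \<in> A" using WO_min[OF WA DF \<open>d0 \<in> D\<close>] by blast
  have b1I: "b1 \<in> I" and b1n: "\<not> is_prefix (restrict_word w (S \<inter> blk b1)) (restrict_word w B0)"
    using b1(1) unfolding D_def by auto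
  have b1F: "b1 \<in> Field A" using b1I IF by blast
  have b1ne: "b1 \<noteq> b0"
  proof
    assume "b1 = b0"
    then have "S \<inter> blk b1 = B0" using B0S by blast
    then show False using b1n prefix_refl by metis
  qed
  define Q where "Q = {g\<in>Field A. (g,b1) \<in> A \<and> g \<noteq> b1}"
  have QF: "Q \<subseteq> Field A" unfolding Q_def by blast
  have Qdown: "\<forall>g\<in>Q. \<forall>d\<in>Field A. (d,g) \<in> A \<longrightarrow> d \<in> Q"
    unfolding Q_def using WO_trans[OF WA] WO_antisym[OF WA] by blast
  have b0Q: "b0 \<in> Q" unfolding Q_def using b0min b1F b0F b1ne by auto
  have Qblk: "\<And>g. g \<in> Q \<Longrightarrow> g \<in> I \<and> blk g \<subseteq> S"
    using I_down[OF b1I] blk_in[OF b1I] unfolding Q_def by blast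
  have Qpre: "\<forall>g\<in>Q. is_prefix (restrict_word w (blk g)) (restrict_word w B0)"
  proof
    fix g assume g: "g \<in> Q"
    have "g \<notin> D" using g b1 WO_antisym[OF WA] unfolding Q_def by blast
    moreover have "S \<inter> blk g = blk g" using Qblk[OF g] by blast
    ultimately show "is_prefix (restrict_word w (blk g)) (restrict_word w B0)"
      using Qblk[OF g] unfolding D_def by auto
  qed
  obtain gm Lm where gm: "gm \<in> Q" "init_seg w Lm" "Lm \<subseteq> B0"
    and tail: "\<forall>g\<in>Q. (gm,g) \<in> A \<longrightarrow> word_eq (restrict_word w (blk g)) (restrict_word w Lm)"
    and mn: "\<forall>g\<in>Q. \<forall>L. init_seg w L \<and> L \<subseteq> B0 \<and> word_eq (restrict_word w (blk g)) (restrict_word w L) \<longrightarrow> Lm \<subseteq> L"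
    using minlen[OF QF Qdown b0Q Qpre] by blast
  have gmF: "gm \<in> Field A" "(gm, b1) \<in> A" using gm(1) unfolding Q_def by auto
  have egm: "word_eq (restrict_word w (blk gm)) (restrict_word w Lm)" using tail gm(1) WO_refl[OF WA gmF(1)] by blast
  have pLm: "is_prefix (restrict_word w Lm) (restrict_word w B0)" using L_pre[OF gm(2,3)] .
  have blk_ok: "is_prefix (restrict_word w (blk b1)) (restrict_word w B0) \<Longrightarrow> False"
    using prefix_trans[OF part_blk_pref[OF b1F] _ Wr Wr] b1n by blast
  from DN[OF gmF(1) b1F gmF(2)] show False
  proof
    assume "\<forall>b\<in>Field A. (gm, b) \<in> A \<and> (b, b1) \<in> A \<longrightarrow> word_eq (u b) (u gm)"
    then have "word_eq (u b1) (u gm)" using b1F gmF WO_refl[OF WA b1F] by blast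
    then have "word_eq (restrict_word w (blk b1)) (restrict_word w (blk gm))" using blk_eq_blk b1F gmF by blast
    then have "word_eq (restrict_word w (blk b1)) (restrict_word w Lm)" using egm word_eq_trans by blast
    then show False using blk_ok prefix_eq_left[OF _ pLm] by blast
  next
    assume "\<exists>b\<in>Field A. \<exists>b'\<in>Field A. (gm, b) \<in> A \<and> (b', b1) \<in> A \<and> (b, b') \<in> A \<and> b \<noteq> b' \<and> lex_less (u b') (u b)"
    then obtain b b' where bb: "b \<in> Field A" "b' \<in> Field A" "(gm, b) \<in> A" "(b', b1) \<in> A" "(b, b') \<in> A" "b \<noteq> b'"
      "lex_less (u b') (u b)" by blast
    have bb1: "(b,b1) \<in> A" using WO_trans[OF WA bb(5) bb(4)] .
    have "b \<noteq> b1" using bb WO_antisym[OF WA] by blast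
    then have bQ: "b \<in> Q" using bb1 bb(1) unfolding Q_def by blast
    have eb: "word_eq (restrict_word w (blk b)) (restrict_word w Lm)" using tail bQ bb(3) by blast
    show False
    proof (cases "b' = b1")
      case False
      then have "b' \<in> Q" using bb unfolding Q_def by blast
      then show False using desc_contra[OF bb(1) bb(2) gm(2) eb] Qpre mn bb(7) by blast
    next
      case True
      have "lex_less (restrict_word w (blk b1)) (restrict_word w (blk b))" using blk_lex_less[OF bb(7) bb(1) bb(2)] True by simp
      then have "lex_le (restrict_word w (blk b1)) (restrict_word w Lm)"
        using lex_le_eq[OF _ word_eq_refl eb Wr Wr Wr Wr] unfolding lex_less_def by blast
      then have "is_prefix (restrict_word w (blk b1)) (restrict_word w B0) \<or> str_less (restrict_word w (blk b1)) (restrict_word w B0)"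
        using lex_le_prefix_trans[OF _ pLm Wr Wr Wr] by blast
      then show False
      proof
        assume "is_prefix (restrict_word w (blk b1)) (restrict_word w B0)"
        then show False using blk_ok by blast
      next
        assume "str_less (restrict_word w (blk b1)) (restrict_word w B0)"
        then have "is_prefix (restrict_word w (S \<inter> blk b1)) (restrict_word w B0) \<or> str_less (restrict_word w (S \<inter> blk b1)) (restrict_word w B0)"
          using prefix_str[OF part_blk_pref[OF b1F] _ Wr Wr Wr] by blast
        then show False using b1n step1[OF b1I b1ne] by blast
      qed
    qed
  qed
qed

lemma lim_str:
  assumes gI: "gm \<in> I" "gm \<noteq> b0" and Lmi: "init_seg w Lm" "Lm \<subseteq> B0"
    and tail: "\<forall>s\<in>I. (gm,s) \<in> A \<longrightarrow> word_eq (restrict_word w (blk s)) (restrict_word w Lm)"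
    and full: "\<forall>b\<in>I. blk b \<subseteq> S"
    and str: "str_less (restrict_word w B0) (restrict_word w (S - SB gm))"
  shows False
proof -
  define T where "T = S - SB gm"
  have TF: "T = {x\<in>S. (gm, fst x) \<in> A}" using SB_facts[OF gI] unfolding T_def by blast
  have gF: "gm \<in> Field A" using gI IF by blast
  obtain c c' where cc: "c \<in> Field (fst (restrict_word w B0))" "c' \<in> Field (fst (restrict_word w T))"
    "word_eq (restrict_word (restrict_word w B0) (below (restrict_word w B0) c))
             (restrict_word (restrict_word w T) (below (restrict_word w T) c'))"
    "snd (restrict_word w B0) c < snd (restrict_word w T) c'"
    using str_lessE[OF str[folded T_def]] by blast
  have cB: "c \<in> B0" "c \<in> Field (fst w)" and c'T: "c' \<in> T" "c' \<in> Field (fst w)" using cc(1,2) unfolding Field_rw by auto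
  have e1: "restrict_word (restrict_word w B0) (below (restrict_word w B0) c) = restrict_word w (below w c)"
    using restrict_below_init[OF B0_init cB(1) Ww] .
  define BT where "BT = T \<inter> below w c'"
  have e2: "restrict_word (restrict_word w T) (below (restrict_word w T) c') = restrict_word w BT"
    unfolding BT_def using c'T(1) by (simp add: below_restrict Int_ac)
  obtain h where h: "wiso (restrict_word w (below w c)) (restrict_word w BT) h"
    using cc(3) unfolding e1 e2 word_eq_iff by blast
  have Fbc: "Field (fst (restrict_word w (below w c))) = below w c" using below_Field[of w c] Field_rw by blast
  have FBT: "Field (fst (restrict_word w BT)) = BT" using below_Field[of w c'] Field_rw unfolding BT_def by blast
  have h_in: "\<And>z. z \<in> below w c \<Longrightarrow> h z \<in> BT" using wisoD(6)[OF h] Fbc FBT by blast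
  have h_surj: "\<And>v. v \<in> BT \<Longrightarrow> \<exists>z\<in>below w c. v = h z" using wisoD(4)[OF h] Fbc FBT by blast
  have h_mono: "\<And>z1 z2. z1 \<in> below w c \<Longrightarrow> z2 \<in> below w c \<Longrightarrow> (z1,z2) \<in> fst w \<Longrightarrow> (h z1, h z2) \<in> fst w"
    using wisoD(2)[OF h] Fbc h_in by auto
  obtain s q where c'e: "c' = (s,q)" by (cases c')
  have sI: "s \<in> I" "q \<in> Field (fst (u s))" using memS[of c'] c'T TF c'e by auto
  have gs: "(gm, s) \<in> A" using c'T TF c'e by auto
  have sF: "s \<in> Field A" using sI IF by blast
  have BT_idx: "\<And>v. v \<in> BT \<Longrightarrow> (fst v, s) \<in> A" using Rw_fst c'e unfolding BT_def below_def by fastforce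
  have lab_lt: "snd w c < snd w c'" using cc(4) by simp
  have bcB: "below w c \<subseteq> B0" using B0_init cB unfolding init_seg_def below_def by blast
  have cS: "c \<in> S" using cB B0S by blast
  show False
  proof (cases "s = gm")
    case True
    have BT_eq: "BT = below w c' \<inter> blk gm"
    proof (intro set_eqI iffI)
      fix v assume v: "v \<in> BT"
      then have "v \<in> S" "(gm, fst v) \<in> A" using TF unfolding BT_def by auto
      moreover have "(fst v, gm) \<in> A" using BT_idx[OF v] True by simp
      ultimately have "fst v = gm" "v \<in> S" using WO_antisym[OF WA] by blast+
      then have "v \<in> blk gm" using memS[of v] unfolding blk_def by (cases v) auto
      then show "v \<in> below w c' \<inter> blk gm" using v unfolding BT_def by blast
    next
      fix v assume v: "v \<in> below w c' \<inter> blk gm"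
      then have "v \<in> S" using full gI by blast
      moreover have "fst v = gm" using v unfolding blk_def by auto
      ultimately show "v \<in> BT" using v TF WO_refl[OF WA gF] unfolding BT_def by auto
    qed
    obtain k where k: "wiso (restrict_word w (blk gm)) (restrict_word w Lm) k"
      using tail gI WO_refl[OF WA gF] word_eq_iff by blast
    have c'blk: "c' \<in> blk gm" using c'e True sI unfolding blk_def by auto
    have c'F: "c' \<in> Field (fst (restrict_word w (blk gm)))" using c'blk Field_blk[OF gF] by simp
    have wk: "wiso (restrict_word (restrict_word w (blk gm)) (below (restrict_word w (blk gm)) c'))
                   (restrict_word (restrict_word w Lm) (below (restrict_word w Lm) (k c'))) k"
      using wiso_below_eq[OF k Wr Wr c'F] .
    have kc': "k c' \<in> Lm" "k c' \<in> Field (fst w)" using wisoD(6)[OF k c'F] Field_rw by auto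
    have r1: "restrict_word (restrict_word w (blk gm)) (below (restrict_word w (blk gm)) c') = restrict_word w BT"
      unfolding BT_eq using c'blk by (simp add: below_restrict Int_ac)
    have r2: "restrict_word (restrict_word w Lm) (below (restrict_word w Lm) (k c')) = restrict_word w (below w (k c'))"
      using restrict_below_init[OF Lmi(1) kc'(1) Ww] .
    have "word_eq (restrict_word w (below w c)) (restrict_word w (below w (k c')))"
      using h wk unfolding r1 r2 word_eq_iff using wiso_trans by blast
    then have "below w c = below w (k c')"
      using init_seg_eq_uniq[OF Ww init_seg_below[OF Ww] init_seg_below[OF Ww]] by blast
    then have "c = k c'" using below_inj[OF Ww cB(2) kc'(2)] by blast
    moreover have "snd w (k c') = snd w c'" using wisoD(3)[OF k c'F] by simp
    ultimately show False using lab_lt by simp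
  next
    case False
    define S0 where "S0 = {z\<in>S. z \<in> below w c \<and> fst (h z) \<noteq> s}"
    have S0i: "init_seg P S0"
      unfolding init_seg_restrict_iff[OF Ww Sinit]
    proof
      show "S0 \<subseteq> S" unfolding S0_def by blast
      show "init_seg w S0"
        unfolding init_seg_def
      proof (intro conjI ballI allI impI)
        show "S0 \<subseteq> Field (fst w)" using SF unfolding S0_def by blast
      next
        fix z y assume z: "z \<in> S0" and yz: "(y,z) \<in> fst w"
        have zb: "z \<in> below w c" "z \<in> S" "fst (h z) \<noteq> s" using z unfolding S0_def by auto
        have yS: "y \<in> S" using S_down zb(2) yz by blast
        have "(y,c) \<in> fst w" using WO_trans[OF Ww yz] zb(1) unfolding below_def by blast
        moreover have "y \<noteq> c" using yz zb(1) WO_antisym[OF Ww, of c z] unfolding below_def by blast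
        ultimately have yb: "y \<in> below w c" unfolding below_def by blast
        have "(h y, h z) \<in> fst w" using h_mono[OF yb zb(1) yz] .
        then have "(fst (h y), fst (h z)) \<in> A" using Rw_fst by blast
        moreover have "(fst (h z), s) \<in> A" using BT_idx[OF h_in[OF zb(1)]] .
        ultimately have "fst (h y) \<noteq> s" using zb(3) WO_antisym[OF WA] by blast
        then show "y \<in> S0" using yS yb unfolding S0_def by blast
      qed
    qed
    obtain q0 where q0: "q0 \<in> Field (fst (u gm))" using blk_nonempty[OF gF] unfolding blk_def by blast
    have v0S: "(gm,q0) \<in> S" using full gI q0 unfolding blk_def by blast
    have "((gm,q0), c') \<in> fst w" unfolding c'e Rw using gF sF q0 sI gs False by auto
    moreover have "(gm,q0) \<noteq> c'" using c'e False by auto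
    ultimately have "(gm,q0) \<in> BT" using v0S TF WO_refl[OF WA gF] unfolding BT_def below_def by auto
    then obtain z0 where z0: "z0 \<in> below w c" "(gm,q0) = h z0" using h_surj by blast
    have "z0 \<in> S0" using z0 bcB B0S False unfolding S0_def by (metis (mono_tags, lifting) fst_conv mem_Collect_eq subsetD)
    then have S0ne: "S0 \<noteq> {}" by blast
    have S0neq: "S0 \<noteq> S" using cS unfolding S0_def below_def by blast
    define Z where "Z = {z\<in>below w c. fst (h z) = s}"
    have Zeq: "(S - S0) \<inter> below w c = Z" using bcB B0S unfolding S0_def Z_def by blast
    have cSS0: "c \<in> S - S0" using cS unfolding S0_def below_def by blast
    have r_below: "restrict_word (restrict_word w (S - S0)) (below (restrict_word w (S - S0)) c) = restrict_word w Z"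
    proof -
      have "(S - S0) \<inter> (below w c \<inter> (S - S0)) = Z" using Zeq by blast
      then show ?thesis using cSS0 by (simp add: below_restrict)
    qed
    have c'blk: "c' \<in> blk s" using c'e sI unfolding blk_def by auto
    have blk_below: "restrict_word (restrict_word w (blk s)) (below (restrict_word w (blk s)) c') = restrict_word w (blk s \<inter> below w c')"
    proof -
      have "blk s \<inter> (below w c' \<inter> blk s) = blk s \<inter> below w c'" by blast
      then show ?thesis using c'blk by (simp add: below_restrict)
    qed
    have hZ: "h ` Z = blk s \<inter> below w c'"
    proof (intro set_eqI iffI)
      fix v assume "v \<in> h ` Z"
      then obtain z where z: "z \<in> Z" "v = h z" by blast
      have "v \<in> BT" using h_in z unfolding Z_def by blast
      then have "v \<in> below w c'" "v \<in> S" unfolding BT_def TF by auto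
      moreover have "fst v = s" using z unfolding Z_def by blast
      ultimately show "v \<in> blk s \<inter> below w c'" using memS[of v] unfolding blk_def by (cases v) auto
    next
      fix v assume v: "v \<in> blk s \<inter> below w c'"
      have vS: "v \<in> S" using S_down[of c' v] v c'T TF unfolding below_def by blast
      have "fst v = s" using v unfolding blk_def by auto
      then have "v \<in> BT" using vS v gs TF unfolding BT_def by auto
      then obtain z where "z \<in> below w c" "v = h z" using h_surj by blast
      then show "v \<in> h ` Z" using \<open>fst v = s\<close> unfolding Z_def by blast
    qed
    have Zsub: "Z \<subseteq> below w c" unfolding Z_def by blast
    have hZBT: "h ` Z \<subseteq> BT" using h_in Zsub by blast
    have wZ: "wiso (restrict_word (restrict_word w (below w c)) Z)
        (restrict_word (restrict_word w BT) (h ` (Z \<inter> Field (fst (restrict_word w (below w c)))))) h"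
      using wiso_restrict[OF h Wr Wr] .
    have "Z \<inter> Field (fst (restrict_word w (below w c))) = Z" using Zsub Fbc by blast
    moreover have "below w c \<inter> Z = Z" using Zsub by blast
    moreover have "BT \<inter> h ` Z = h ` Z" using hZBT by blast
    ultimately have "word_eq (restrict_word w Z) (restrict_word w (blk s \<inter> below w c'))"
      using wZ hZ word_eq_iff by (metis restrict_restrict)
    then have sl: "str_less (restrict_word w (S - S0)) (restrict_word w (blk s))"
    proof (intro str_lessI[of c _ c'])
      show "c \<in> Field (fst (restrict_word w (S - S0)))" using cSS0 cB Field_rw by blast
      show "c' \<in> Field (fst (restrict_word w (blk s)))" using c'blk Field_blk[OF sF] by simp
      assume "word_eq (restrict_word w Z) (restrict_word w (blk s \<inter> below w c'))"
      then show "word_eq (restrict_word (restrict_word w (S - S0)) (below (restrict_word w (S - S0)) c))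
          (restrict_word (restrict_word w (blk s)) (below (restrict_word w (blk s)) c'))"
        unfolding r_below blk_below .
      show "snd (restrict_word w (S - S0)) c < snd (restrict_word w (blk s)) c'" using lab_lt by simp
    qed
    have "word_eq (restrict_word w (blk s)) (restrict_word w Lm)" using tail sI gs by blast
    then have "str_less (restrict_word w (S - S0)) (restrict_word w Lm)" using str_eq_right[OF sl _ Wr Wr] by blast
    moreover have "is_prefix (restrict_word w Lm) P" using prefix_subset[OF Lmi(1) Sinit _ Ww] Lmi(2) B0S by blast
    ultimately have "str_less (restrict_word w (S - S0)) P" using str_ext_right[OF _ _ Wr Wr] by blast
    then show False using suffix_contra[OF S0i S0ne S0neq] by blast
  qed
qed

end



context ctx begin

lemma lim_pre:
  assumes gI: "gm \<in> I" "gm \<noteq> b0" and Lmi: "init_seg w Lm" "Lm \<subseteq> B0" "Lm \<noteq> B0"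
    and tail: "\<forall>s\<in>I. (gm,s) \<in> A \<longrightarrow> word_eq (restrict_word w (blk s)) (restrict_word w Lm)"
    and full: "\<forall>b\<in>I. blk b \<subseteq> S"
    and pre: "is_prefix (restrict_word w B0) (restrict_word w (S - SB gm))"
  shows False
proof -
  define T where "T = S - SB gm"
  have TF: "T = {x\<in>S. (gm, fst x) \<in> A}" using SB_facts[OF gI] unfolding T_def by blast
  have gF: "gm \<in> Field A" using gI IF by blast
  obtain S2 where S2i: "init_seg (restrict_word w T) S2"
    and eS: "word_eq (restrict_word w B0) (restrict_word (restrict_word w T) S2)"
    using pre[folded T_def] is_prefix_def by blast
  have S2T: "S2 \<subseteq> T" "S2 \<subseteq> Field (fst w)" using S2i unfolding init_seg_def Field_rw by auto
  have S2down: "\<And>x y. x \<in> S2 \<Longrightarrow> y \<in> T \<Longrightarrow> (y,x) \<in> fst w \<Longrightarrow> y \<in> S2"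
    using S2i S2T unfolding init_seg_def by auto
  have rS: "restrict_word (restrict_word w T) S2 = restrict_word w S2" using S2T by (simp add: Int_absorb1)
  obtain h where h: "wiso (restrict_word w B0) (restrict_word w S2) h" using eS rS word_eq_iff by metis
  have FB0: "Field (fst (restrict_word w B0)) = B0" using Field_blk[OF b0F] .
  have FS2: "Field (fst (restrict_word w S2)) = S2" using S2T Field_rw by blast
  have h_in: "\<And>z. z \<in> B0 \<Longrightarrow> h z \<in> S2" using wisoD(6)[OF h] FB0 FS2 by blast
  have h_surj: "\<And>v. v \<in> S2 \<Longrightarrow> \<exists>z\<in>B0. v = h z" using wisoD(4)[OF h] FB0 FS2 by blast
  have h_mono: "\<And>z1 z2. z1 \<in> B0 \<Longrightarrow> z2 \<in> B0 \<Longrightarrow> (z1,z2) \<in> fst w \<Longrightarrow> (h z1, h z2) \<in> fst w"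
    using wisoD(2)[OF h] FB0 h_in by auto
  have blkT: "\<And>s. s \<in> I \<Longrightarrow> (gm,s) \<in> A \<Longrightarrow> blk s \<subseteq> T"
    using full TF unfolding blk_def by auto
  have S2idx: "\<And>x. x \<in> S2 \<Longrightarrow> fst x \<in> I \<and> (gm, fst x) \<in> A \<and> x \<in> blk (fst x)"
  proof -
    fix x assume "x \<in> S2"
    then have "x \<in> S" "(gm, fst x) \<in> A" using S2T TF by auto
    then show "fst x \<in> I \<and> (gm, fst x) \<in> A \<and> x \<in> blk (fst x)" using memS[of x] unfolding blk_def by (cases x) auto
  qed
  have blk_rel: "\<And>v x. v \<in> blk (fst v) \<Longrightarrow> x \<in> blk (fst x) \<Longrightarrow> fst v \<in> Field A \<Longrightarrow> fst x \<in> Field A \<Longrightarrow>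
      (fst v, fst x) \<in> A \<Longrightarrow> fst v \<noteq> fst x \<Longrightarrow> (v, x) \<in> fst w"
  proof -
    fix v x
    assume "v \<in> blk (fst v)" "x \<in> blk (fst x)" "fst v \<in> Field A" "fst x \<in> Field A" "(fst v, fst x) \<in> A" "fst v \<noteq> fst x"
    then show "(v, x) \<in> fst w" using Rw[of "fst v" "snd v" "fst x" "snd x"] unfolding blk_def by auto
  qed
  have gblk: "blk gm \<subseteq> S2"
  proof (rule ccontr)
    assume "\<not> blk gm \<subseteq> S2"
    then obtain v where v: "v \<in> blk gm" "v \<notin> S2" by blast
    have vT: "v \<in> T" using blkT[OF gI(1)] WO_refl[OF WA gF] v by blast
    have sub: "S2 \<subseteq> blk gm"
    proof
      fix x assume x: "x \<in> S2"
      note xi = S2idx[OF x]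
      show "x \<in> blk gm"
      proof (cases "fst x = gm")
        case True then show ?thesis using xi by simp
      next
        case False
        have "fst v = gm" "v \<in> blk (fst v)" using v unfolding blk_def by auto
        then have "(v, x) \<in> fst w" using blk_rel[of v x] xi False gF IF by auto
        then have "v \<in> S2" using S2down[OF x vT] by blast
        then show ?thesis using v by blast
      qed
    qed
    have "init_seg (restrict_word w (blk gm)) S2"
      unfolding init_seg_def Field_blk[OF gF]
    proof (intro conjI ballI allI impI)
      show "S2 \<subseteq> blk gm" by fact
    next
      fix x y assume x: "x \<in> S2" and yx: "(y,x) \<in> fst (restrict_word w (blk gm))"
      then have "y \<in> blk gm" "(y,x) \<in> fst w" by auto
      then show "y \<in> S2" using S2down[OF x] blkT[OF gI(1)] WO_refl[OF WA gF] by blast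
    qed
    then have "is_prefix (restrict_word (restrict_word w (blk gm)) S2) (restrict_word w (blk gm))" by (rule prefix_restrict)
    moreover have "blk gm \<inter> S2 = S2" using sub by blast
    ultimately have "is_prefix (restrict_word w S2) (restrict_word w (blk gm))" by simp
    then have "is_prefix (restrict_word w B0) (restrict_word w (blk gm))" using prefix_eq_left eS rS by metis
    then have "is_prefix (restrict_word w B0) (restrict_word w Lm)"
      using prefix_eq_right[OF _ _ Wr Wr] tail gI(1) WO_refl[OF WA gF] by blast
    then have "B0 \<subseteq> Lm" using prefix_uniq[OF Ww B0_init Lmi(1)] by blast
    then show False using Lmi by blast
  qed
  obtain q0 where q0: "q0 \<in> Field (fst (u gm))" using blk_nonempty[OF gF] unfolding blk_def by blast
  have v0: "(gm,q0) \<in> S2" using gblk q0 unfolding blk_def by blast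
  show False
  proof (cases "\<exists>s\<in>I. (gm,s) \<in> A \<and> blk s \<inter> S2 \<noteq> {} \<and> \<not> blk s \<subseteq> S2")
    case True
    then obtain s where s: "s \<in> I" "(gm,s) \<in> A" "blk s \<inter> S2 \<noteq> {}" "\<not> blk s \<subseteq> S2" by blast
    have sF: "s \<in> Field A" using s IF by blast
    have sne: "s \<noteq> gm" using s gblk by blast
    obtain v where v: "v \<in> blk s" "v \<notin> S2" using s by blast
    have vT: "v \<in> T" using blkT[OF s(1,2)] v by blast
    have bound: "\<And>x. x \<in> S2 \<Longrightarrow> (fst x, s) \<in> A"
    proof (rule ccontr)
      fix x assume x: "x \<in> S2" and nx: "(fst x, s) \<notin> A"
      note xi = S2idx[OF x]
      have xF: "fst x \<in> Field A" using xi IF by blast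
      have "(s, fst x) \<in> A" "s \<noteq> fst x" using WO_total[OF WA sF xF] nx WO_refl[OF WA sF] by auto
      moreover have "fst v = s" "v \<in> blk (fst v)" using v unfolding blk_def by auto
      ultimately have "(v, x) \<in> fst w" using blk_rel[of v x] xi sF xF by auto
      then have "v \<in> S2" using S2down[OF x vT] by blast
      then show False using v by blast
    qed
    define S1 where "S1 = {z\<in>B0. fst (h z) \<noteq> s}"
    have S1i: "init_seg (restrict_word w B0) S1"
      unfolding init_seg_restrict_iff[OF Ww B0_init]
    proof
      show "S1 \<subseteq> B0" unfolding S1_def by blast
      show "init_seg w S1"
        unfolding init_seg_def
      proof (intro conjI ballI allI impI)
        show "S1 \<subseteq> Field (fst w)" using blk_sub'[OF b0F] unfolding S1_def by blast
      next
        fix z y assume z: "z \<in> S1" and yz: "(y,z) \<in> fst w"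
        have zB: "z \<in> B0" "fst (h z) \<noteq> s" using z unfolding S1_def by auto
        have yB: "y \<in> B0" using B0_init zB(1) yz unfolding init_seg_def by blast
        have "(fst (h y), fst (h z)) \<in> A" using Rw_fst[OF h_mono[OF yB zB(1) yz]] .
        moreover have "(fst (h z), s) \<in> A" using bound[OF h_in[OF zB(1)]] .
        ultimately have "fst (h y) \<noteq> s" using zB(2) WO_antisym[OF WA] by blast
        then show "y \<in> S1" using yB unfolding S1_def by blast
      qed
    qed
    obtain z0 where z0: "z0 \<in> B0" "(gm,q0) = h z0" using h_surj[OF v0] by blast
    have S1ne: "S1 \<noteq> {}" using z0 sne unfolding S1_def by (metis (mono_tags, lifting) empty_iff fst_conv mem_Collect_eq)
    obtain y0 where y0: "y0 \<in> blk s" "y0 \<in> S2" using s(3) by blast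
    obtain z1 where z1: "z1 \<in> B0" "y0 = h z1" using h_surj[OF y0(2)] by blast
    have "fst (h z1) = s" using y0 z1 unfolding blk_def by auto
    then have S1neq: "S1 \<noteq> Field (fst (restrict_word w B0))" using z1 FB0 unfolding S1_def by blast
    have l: "lex_le (restrict_word w B0) (restrict_word (restrict_word w B0) (Field (fst (restrict_word w B0)) - S1))"
      using prime_B0 S1i S1ne S1neq unfolding prime_word_def by blast
    have l': "lex_le (restrict_word w B0) (restrict_word w (B0 - S1))"
    proof -
      have "B0 \<inter> (B0 - S1) = B0 - S1" by blast
      then show ?thesis using l unfolding FB0 by simp
    qed
    define Y where "Y = blk s \<inter> S2"
    have hY: "h ` (B0 - S1) = Y"
    proof (intro set_eqI iffI)
      fix v assume "v \<in> h ` (B0 - S1)"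
      then obtain z where z: "z \<in> B0" "fst (h z) = s" "v = h z" unfolding S1_def by blast
      have "h z \<in> S2" using h_in z(1) .
      then have "h z \<in> blk (fst (h z))" using S2idx by blast
      then show "v \<in> Y" using z \<open>h z \<in> S2\<close> unfolding Y_def by simp
    next
      fix v assume v: "v \<in> Y"
      then obtain z where z: "z \<in> B0" "v = h z" using h_surj unfolding Y_def by blast
      have "fst v = s" using v unfolding Y_def blk_def by auto
      then show "v \<in> h ` (B0 - S1)" using z unfolding S1_def by blast
    qed
    have w1: "wiso (restrict_word (restrict_word w B0) (B0 - S1))
        (restrict_word (restrict_word w S2) (h ` ((B0 - S1) \<inter> Field (fst (restrict_word w B0))))) h"
      using wiso_restrict[OF h Wr Wr] .
    have "(B0 - S1) \<inter> Field (fst (restrict_word w B0)) = B0 - S1" using FB0 by blast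
    moreover have "B0 \<inter> (B0 - S1) = B0 - S1" by blast
    moreover have "S2 \<inter> Y = Y" unfolding Y_def by blast
    ultimately have e1: "word_eq (restrict_word w (B0 - S1)) (restrict_word w Y)"
      using w1 hY word_eq_iff by (metis restrict_restrict)
    have Yi: "init_seg (restrict_word w (blk s)) Y"
      unfolding init_seg_def Field_blk[OF sF]
    proof (intro conjI ballI allI impI)
      show "Y \<subseteq> blk s" unfolding Y_def by blast
    next
      fix x y assume x: "x \<in> Y" and yx: "(y,x) \<in> fst (restrict_word w (blk s))"
      then have "y \<in> blk s" "(y,x) \<in> fst w" by auto
      then show "y \<in> Y" using S2down[of x y] x blkT[OF s(1,2)] unfolding Y_def by blast
    qed
    obtain k where k: "wiso (restrict_word w (blk s)) (restrict_word w Lm) k"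
      using tail s word_eq_iff by blast
    have kYi: "init_seg (restrict_word w Lm) (k ` Y)" using wiso_init_seg[OF k Wr Wr Yi] .
    have kYw: "init_seg w (k ` Y)" "k ` Y \<subseteq> Lm" using init_seg_restr_trans[OF Ww Lmi(1) kYi] by auto
    have w2: "wiso (restrict_word (restrict_word w (blk s)) Y)
        (restrict_word (restrict_word w Lm) (k ` (Y \<inter> Field (fst (restrict_word w (blk s)))))) k"
      using wiso_restrict[OF k Wr Wr] .
    have "Y \<inter> Field (fst (restrict_word w (blk s))) = Y" using Field_blk[OF sF] unfolding Y_def by blast
    moreover have "blk s \<inter> Y = Y" unfolding Y_def by blast
    moreover have "Lm \<inter> k ` Y = k ` Y" using kYw by blast
    ultimately have e2: "word_eq (restrict_word w Y) (restrict_word w (k ` Y))"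
      using w2 word_eq_iff by (metis restrict_restrict)
    have kYne: "k ` Y \<noteq> Lm"
    proof
      assume kY: "k ` Y = Lm"
      have kimg: "k ` blk s = Lm" using wisoD(4)[OF k] Field_blk[OF sF] Field_rw Lmi(1)
        unfolding init_seg_def by auto
      have "inj_on k (blk s)" using wisoD(5)[OF k] Field_blk[OF sF] by simp
      moreover have "Y \<subseteq> blk s" unfolding Y_def by blast
      ultimately have "Y = blk s" using kY kimg inj_on_image_eq_iff[of k "blk s" Y "blk s"] by auto
      then show False using s(4) unfolding Y_def by blast
    qed
    have "lex_le (restrict_word w B0) (restrict_word w (k ` Y))"
      using lex_le_eq[OF l' word_eq_refl word_eq_trans[OF e1 e2] Wr Wr Wr Wr] .
    moreover have "\<not> B0 \<subseteq> k ` Y" using kYw Lmi kYne by blast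
    ultimately show False using not_lex_le_shorter[OF Ww B0_init kYw(1)] by blast
  next
    case False
    define J where "J = {s\<in>I. (gm,s) \<in> A \<and> blk s \<subseteq> S2}"
    have JF: "J \<subseteq> Field A" using IF unfolding J_def by blast
    have S2eq: "S2 = Sigma J (\<lambda>i. Field (fst (u i)))"
    proof (intro set_eqI iffI)
      fix x assume x: "x \<in> S2"
      note xi = S2idx[OF x]
      have "blk (fst x) \<subseteq> S2" using False xi x by blast
      then have "fst x \<in> J" using xi unfolding J_def by blast
      then show "x \<in> Sigma J (\<lambda>i. Field (fst (u i)))" using xi unfolding blk_def by (cases x) auto
    next
      fix x assume "x \<in> Sigma J (\<lambda>i. Field (fst (u i)))"
      then show "x \<in> S2" unfolding J_def blk_def by auto
    qed
    have gmJ: "gm \<in> J" using gI gblk WO_refl[OF WA gF] unfolding J_def by blast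
    show False
    proof (cases "\<exists>s2\<in>J. s2 \<noteq> gm")
      case True
      then obtain s2 where s2: "s2 \<in> J" "s2 \<noteq> gm" by blast
      have egm: "word_eq (restrict_word w (blk gm)) (restrict_word w Lm)" using tail gI WO_refl[OF WA gF] by blast
      have eqs: "\<forall>s\<in>J. word_eq (u s) (u gm)"
      proof
        fix s assume s: "s \<in> J"
        then have sF: "s \<in> Field A" using JF by blast
        have "word_eq (restrict_word w (blk s)) (restrict_word w Lm)" using tail s unfolding J_def by blast
        then have "word_eq (restrict_word w (blk s)) (restrict_word w (blk gm))" using egm word_eq_trans word_eq_sym by blast
        then show "word_eq (u s) (u gm)" using blk_eq[OF sF] blk_eq[OF gF] word_eq_trans word_eq_sym by metis
      qed
      have np: "\<not> primitive (restrict_word w S2)" using NP[OF JF gmJ s2(1) s2(2)[symmetric] eqs] S2eq by simp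
      have "primitive (restrict_word w B0)" using prime_B0 prime_word_def by blast
      then have "primitive (restrict_word w S2)" using primitive_eq eS rS by metis
      then show False using np by blast
    next
      case False
      then have "J = {gm}" using gmJ by blast
      then have "S2 = blk gm" using S2eq unfolding blk_def by auto
      then have "word_eq (restrict_word w B0) (restrict_word w Lm)"
        using eS rS tail gI WO_refl[OF WA gF] word_eq_trans by metis
      then have "B0 = Lm" using init_seg_eq_uniq[OF Ww B0_init Lmi(1)] by blast
      then show False using Lmi by blast
    qed
  qed
qed

end

context ctx begin

lemma ctx_False: False
proof (cases "\<exists>k\<in>I. \<forall>j\<in>I. (j,k) \<in> A")
  case True
  then obtain k where k: "k \<in> I" "\<forall>j\<in>I. (j,k) \<in> A" by blast
  obtain i1 where i1': "i1 \<in> I" "i1 \<noteq> b0" using i1 by blast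
  have "k \<noteq> b0"
  proof
    assume "k = b0"
    then have "(i1, b0) \<in> A" using k i1' by blast
    moreover have "(b0, i1) \<in> A" using b0min i1' IF by blast
    ultimately show False using WO_antisym[OF WA] i1' by blast
  qed
  then show False using last_block[OF k(1) _ k(2)] claimA k(1) by blast
next
  case False
  have full: "\<forall>b\<in>I. blk b \<subseteq> S"
  proof
    fix b assume b: "b \<in> I"
    obtain j where j: "j \<in> I" "(j,b) \<notin> A" using False b by blast
    have bF: "b \<in> Field A" "j \<in> Field A" using b j IF by auto
    have "(b,j) \<in> A" "b \<noteq> j" using WO_total[OF WA bF] j WO_refl[OF WA bF(1)] by auto
    then show "blk b \<subseteq> S" using blk_in[OF j(1) bF(1)] by blast
  qed
  have Qdown: "\<forall>g\<in>I. \<forall>d\<in>Field A. (d,g) \<in> A \<longrightarrow> d \<in> I" using I_down by blast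
  have Qpre: "\<forall>g\<in>I. is_prefix (restrict_word w (blk g)) (restrict_word w B0)"
  proof
    fix g assume g: "g \<in> I"
    have "S \<inter> blk g = blk g" using full g by blast
    then show "is_prefix (restrict_word w (blk g)) (restrict_word w B0)" using claimA g by metis
  qed
  obtain gm Lm where gm: "gm \<in> I" "init_seg w Lm" "Lm \<subseteq> B0"
    and tail: "\<forall>g\<in>I. (gm,g) \<in> A \<longrightarrow> word_eq (restrict_word w (blk g)) (restrict_word w Lm)"
    and c3: "gm \<noteq> b0 \<longrightarrow> Lm \<noteq> B0"
    using minlen[OF IF Qdown b0I Qpre] by blast
  show False
  proof (cases "gm = b0")
    case True
    have "word_eq (restrict_word w B0) (restrict_word w Lm)" using tail b0I True WO_refl[OF WA b0F] by blast
    then have LB: "Lm = B0" using init_seg_eq_uniq[OF Ww B0_init gm(2)] by blast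
    have eqs: "\<forall>s\<in>I. word_eq (u s) (u b0)"
    proof
      fix s assume s: "s \<in> I"
      then have sF: "s \<in> Field A" using IF by blast
      have "word_eq (restrict_word w (blk s)) (restrict_word w B0)" using tail s True b0min sF LB by blast
      then show "word_eq (u s) (u b0)" using blk_eq[OF sF] blk_eq[OF b0F] word_eq_trans word_eq_sym by metis
    qed
    obtain i1 where i1': "i1 \<in> I" "i1 \<noteq> b0" using i1 by blast
    have "S = Sigma I (\<lambda>i. Field (fst (u i)))"
    proof (intro set_eqI iffI)
      fix x assume "x \<in> S" then show "x \<in> Sigma I (\<lambda>i. Field (fst (u i)))" using memS[of x] by (cases x) auto
    next
      fix x assume "x \<in> Sigma I (\<lambda>i. Field (fst (u i)))"
      then show "x \<in> S" using full unfolding blk_def by auto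
    qed
    then have "\<not> primitive P" using NP[OF IF b0I i1'(1) i1'(2)[symmetric] eqs] by simp
    then show False using Sprime prime_word_def by blast
  next
    case False
    have Lne: "Lm \<noteq> B0" using c3 False by blast
    have "lex_le P (restrict_word w (S - SB gm))" using prime_suffix SB_facts[OF gm(1) False] by blast
    then have "lex_le (restrict_word w B0) (restrict_word w (S - SB gm))"
      using lex_le_prefix_left[OF B0_pref_P _ Wr Wr Wr] by blast
    then show False unfolding lex_le_def
      using lim_pre[OF gm(1) False gm(2) gm(3) Lne tail full] lim_str[OF gm(1) False gm(2) gm(3) tail full] by blast
  qed
qed

end

theorem mainTheorem8:
  fixes A :: "'i rel" and u :: "'i \<Rightarrow> ('p, 'a::{finite, linorder}) word" and b0 :: 'i
  assumes "Well_order A" and "countable (Field A)"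
    and "b0 \<in> Field A" and "\<forall>b\<in>Field A. (b0, b) \<in> A"
    and "\<forall>b\<in>Field A. wf_word (u b) \<and> prime_word (u b)"
    and "dense_nonincr A u"
  shows "is_prefix (u b0) (word_prod A u) \<and>
         (\<forall>S. init_seg (word_prod A u) S \<and> prime_word (restrict_word (word_prod A u) S)
              \<longrightarrow> is_prefix (restrict_word (word_prod A u) S) (u b0))"
proof -
  interpret setting A u b0 using assms by unfold_locales
  have c1: "is_prefix (u b0) w"
    using prefix_eq_left[OF blk_eq[OF b0F] prefix_restrict[OF B0_init]] .
  have c2: "is_prefix (restrict_word w S) (u b0)" if S: "init_seg w S" "prime_word (restrict_word w S)" for S
  proof (cases "S \<subseteq> B0")
    case True
    have "is_prefix (restrict_word w S) (restrict_word w B0)" using prefix_subset[OF S(1) B0_init True Ww] .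
    then show ?thesis using prefix_eq_right[OF word_eq_sym[OF blk_eq[OF b0F]] _ Wr Wu[OF b0F]] by blast
  next
    case False
    interpret ctx A u b0 S using S False by unfold_locales
    show ?thesis using ctx_False by blast
  qed
  show ?thesis using c1 c2 unfolding w_def by blast
qed

end
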